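(* Let $\overline{\mathcal{O}}=\prod_{t}\overline{\mathcal{O}}_t$ (a finite product) be as in the context, with $\varphi:\overline{\mathcal{O}}\to\overline{\mathcal{O}}$ the digit-shift map and $\langle\cdot\rangle$ the componentwise fractional part. Let $K$ be any complete non-Archimedean field and let $\mathbf{\Gamma}:\overline{\mathcal{O}}\to K$ be a continuous non-vanishing function. Then a function $H:\overline{\mathcal{O}}\to K$ is continuous, non-vanishing, and satisfies, for all $n\in\mathbb{N}$ and all $\mathbf{x}=(\mathbf{x}_t)_t\in(\boldsymbol{\pi}^n-\mathbf{1})^{-1}\mathcal{O}$ such that for every $t$ one has $0\le \mathbf{x}_t<1$ if $\mathcal{O}_t=\mathbb{Z}$ and $|\mathbf{x}_t|<1$ if $\mathcal{O}_t=A$, $$\prod_{j=0}^{n-1}\mathbf{\Gamma}\left(\langle\boldsymbol{\pi}^j\mathbf{x}\rangle\right)=\prod_{j=0}^{n-1}H\left(\langle\boldsymbol{\pi}^j\mathbf{x}\rangle\right),$$ if and only if there exists a continuous non-vanishing function $G:\overline{\mathcal{O}}\to K$ such that $$H(\mathbf{x})=\mathbf{\Gamma}(\mathbf{x})\cdot\frac{G(\mathbf{x})}{G(-\varphi(-\mathbf{x}))}\quad\text{for all }\mathbf{x}\in\overline{\mathcal{O}}.$$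
   Context: Let $p$ be a prime, $q$ a power of $p$, $A=\mathbb{F}_q[\theta]$ and $k=\mathbb{F}_q(\theta)$, with the $\infty$-adic absolute value $|0|=0$, $|f/g|=q^{\deg f-\deg g}$ for nonzero $f,g\in A$. Let $\mathcal{O}=\prod_t\mathcal{O}_t$ be a direct product of finitely many rings, each $\mathcal{O}_t$ equal to $\mathbb{Z}$ or $A$. For each $t$ fix a finite prime: a prime number $p_t$ if $\mathcal{O}_t=\mathbb{Z}$ (then $\overline{\mathcal{O}}_t=\mathbb{Z}_{p_t}$), or a monic irreducible $v_t\in A$ if $\mathcal{O}_t=A$ (then $\overline{\mathcal{O}}_t=A_{v_t}$, the completion of $A$ at $v_t$); set $\overline{\mathcal{O}}=\prod_t\overline{\mathcal{O}}_t$. For each $t$ fix $\pi_t$ a positive power of the given uniformizer ($p_t$ or $v_t$), and put $\boldsymbol{\pi}=(\pi_t)_t$, $\mathbf{1}=(1,\dots,1)$. Every $\mathbf{x}_t\in\overline{\mathcal{O}}_t$ has a unique expansion $\mathbf{x}_t=\sum_{i\ge0}x_{t,i}\pi_t^i$ with $x_{t,i}$ an integer, $0\le x_{t,i}<\pi_t$, if $\mathcal{O}_t=\mathbb{Z}$, and $x_{t,i}\in A$ with $\deg x_{t,i}<\deg\pi_t$ if $\mathcal{O}_t=A$. Define $\varphi_t(\mathbf{x}_t)=\sum_{i\ge0}x_{t,i+1}\pi_t^i$ and $\varphi(\mathbf{x})=(\varphi_t(\mathbf{x}_t))_t$. Fractional parts: for $y\in\mathbb{Q}$, $\langle y\rangle$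 is the unique element of $\mathbb{Q}$ with $0\le\langle y\rangle<1$ and $y-\langle y\rangle\in\mathbb{Z}$; for $x\in k$, $\langle x\rangle$ is the unique element of $k$ with $|\langle x\rangle|<1$ and $x-\langle x\rangle\in A$; for $\mathbf{x}\in\prod_t\mathrm{Frac}(\mathcal{O}_t)$, $\langle\mathbf{x}\rangle=(\langle\mathbf{x}_t\rangle)_t$. Elements of $(\boldsymbol{\pi}^n-\mathbf{1})^{-1}\mathcal{O}$ and their fractional parts are regarded as elements of $\overline{\mathcal{O}}$ via the natural embeddings. *)

theory Defs
  imports "HOL-Computational_Algebra.Computational_Algebra"
begin

definition nonarch_complete_field :: "('k::field \<Rightarrow> real) \<Rightarrow> bool" where
  "nonarch_complete_field absv \<longleftrightarrow>
     (\<forall>x. 0 \<le> absv x) \<and>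
     (\<forall>x. absv x = 0 \<longleftrightarrow> x = 0) \<and>
     (\<forall>x y. absv (x * y) = absv x * absv y) \<and>
     (\<forall>x y. absv (x + y) \<le> max (absv x) (absv y)) \<and>
     (\<forall>s::nat \<Rightarrow> 'k.
        (\<forall>e>0. \<exists>N. \<forall>m\<ge>N. \<forall>n\<ge>N. absv (s m - s n) < e) \<longrightarrow>
        (\<exists>L. \<forall>e>0. \<exists>N. \<forall>n\<ge>N. absv (s n - L) < e))"

text \<open>An element of the completion of O_t (= Z or A) at w is represented by the
  compatible sequence of its canonical residues modulo pi^k (k = 0,1,2,...).
  For int (w > 0) the canonical residue lies in [0, w^k); for polynomials its
  degree is < deg(w^k).\<close>

definition Obar :: "'a::euclidean_ring \<Rightarrow> (nat \<Rightarrow> 'a) set" where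
  "Obar w = {f. \<forall>k. f k = f (Suc k) mod w ^ k}"

definition digit :: "'a::euclidean_ring \<Rightarrow> (nat \<Rightarrow> 'a) \<Rightarrow> nat \<Rightarrow> 'a" where
  "digit w f i = (f (Suc i) - f i) div w ^ i"

definition phiO :: "'a::euclidean_ring \<Rightarrow> (nat \<Rightarrow> 'a) \<Rightarrow> (nat \<Rightarrow> 'a)" where
  "phiO w f = (\<lambda>k. \<Sum>i<k. digit w f (Suc i) * w ^ i)"

definition negO :: "'a::euclidean_ring \<Rightarrow> (nat \<Rightarrow> 'a) \<Rightarrow> (nat \<Rightarrow> 'a)" where
  "negO w f = (\<lambda>k. (- f k) mod w ^ k)"

text \<open>The natural embedding of the fraction a/d (d a unit in the completion) into the
  completion: the unique element y with d * y = a.\<close>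
definition embO :: "'a::euclidean_ring \<Rightarrow> 'a \<Rightarrow> 'a \<Rightarrow> (nat \<Rightarrow> 'a)" where
  "embO w d a = (THE y. y \<in> Obar w \<and> (\<forall>k. (d * y k) mod w ^ k = a mod w ^ k))"

text \<open>The product is taken over mZ components equal to Z (uniformisers-power PZ t,
  t < mZ) and mA components equal to A = F_q[theta] (PA t, t < mA).  An element is a
  pair of families of component elements; unused indices are fixed to 0.\<close>

type_synonym 'f obar = "(nat \<Rightarrow> nat \<Rightarrow> int) \<times> (nat \<Rightarrow> nat \<Rightarrow> 'f poly)"

definition ObarP :: "nat \<Rightarrow> nat \<Rightarrow> (nat \<Rightarrow> int) \<Rightarrow> (nat \<Rightarrow> 'f::{field,finite} poly)
    \<Rightarrow> 'f obar set" where
  "ObarP mZ mA PZ PA = {(xz, xa).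
      (\<forall>t<mZ. xz t \<in> Obar (PZ t)) \<and> (\<forall>t. mZ \<le> t \<longrightarrow> xz t = (\<lambda>_. 0)) \<and>
      (\<forall>t<mA. xa t \<in> Obar (PA t)) \<and> (\<forall>t. mA \<le> t \<longrightarrow> xa t = (\<lambda>_. 0))}"

definition phiP :: "nat \<Rightarrow> nat \<Rightarrow> (nat \<Rightarrow> int) \<Rightarrow> (nat \<Rightarrow> 'f::{field,finite} poly)
    \<Rightarrow> 'f obar \<Rightarrow> 'f obar" where
  "phiP mZ mA PZ PA x =
     ((\<lambda>t. if t < mZ then phiO (PZ t) (fst x t) else (\<lambda>_. 0)),
      (\<lambda>t. if t < mA then phiO (PA t) (snd x t) else (\<lambda>_. 0)))"

definition negP :: "nat \<Rightarrow> nat \<Rightarrow> (nat \<Rightarrow> int) \<Rightarrow> (nat \<Rightarrow> 'f::{field,finite} poly)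
    \<Rightarrow> 'f obar \<Rightarrow> 'f obar" where
  "negP mZ mA PZ PA x =
     ((\<lambda>t. if t < mZ then negO (PZ t) (fst x t) else (\<lambda>_. 0)),
      (\<lambda>t. if t < mA then negO (PA t) (snd x t) else (\<lambda>_. 0)))"

definition contP :: "nat \<Rightarrow> nat \<Rightarrow> (nat \<Rightarrow> int) \<Rightarrow> (nat \<Rightarrow> 'f::{field,finite} poly)
    \<Rightarrow> ('k::field \<Rightarrow> real) \<Rightarrow> ('f obar \<Rightarrow> 'k) \<Rightarrow> bool" where
  "contP mZ mA PZ PA absv H \<longleftrightarrow>
     (\<forall>x\<in>ObarP mZ mA PZ PA. \<forall>e>0. \<exists>N. \<forall>y\<in>ObarP mZ mA PZ PA.
        ((\<forall>t<mZ. fst y t N = fst x t N) \<and> (\<forall>t<mA. snd y t N = snd x t N)) \<longrightarrow>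
        absv (H y - H x) < e)"

definition nonvanishingP :: "nat \<Rightarrow> nat \<Rightarrow> (nat \<Rightarrow> int) \<Rightarrow> (nat \<Rightarrow> 'f::{field,finite} poly)
    \<Rightarrow> ('f obar \<Rightarrow> 'k::field) \<Rightarrow> bool" where
  "nonvanishingP mZ mA PZ PA H \<longleftrightarrow> (\<forall>x\<in>ObarP mZ mA PZ PA. H x \<noteq> 0)"

text \<open>An element of (pi_t^n - 1)^{-1} O_t is written b/(pi_t^n - 1)
  with b in O_t.  Its fractional part is r/(pi_t^n - 1) with r = b mod (pi_t^n - 1):
  for Z this is the residue in [0, pi_t^n - 1), for A the remainder of degree
  < deg(pi_t^n - 1), i.e. exactly the unique representative with 0 <= . < 1,
  resp. with |.| < 1.  fracP n bz ba is the element
  < (b_t/(pi_t^n - 1))_t > of Obar (via the natural embeddings).\<close>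
definition fracP :: "nat \<Rightarrow> nat \<Rightarrow> (nat \<Rightarrow> int) \<Rightarrow> (nat \<Rightarrow> 'f::{field,finite} poly)
    \<Rightarrow> nat \<Rightarrow> (nat \<Rightarrow> int) \<Rightarrow> (nat \<Rightarrow> 'f poly) \<Rightarrow> 'f obar" where
  "fracP mZ mA PZ PA n bz ba =
     ((\<lambda>t. if t < mZ then embO (PZ t) (PZ t ^ n - 1) (bz t mod (PZ t ^ n - 1))
           else (\<lambda>_. 0)),
      (\<lambda>t. if t < mA then embO (PA t) (PA t ^ n - 1) (ba t mod (PA t ^ n - 1))
           else (\<lambda>_. 0)))"

end

theory Submission
  imports Defs
begin

definition psiO :: "'a::euclidean_ring \<Rightarrow> (nat \<Rightarrow> 'a) \<Rightarrow> (nat \<Rightarrow> 'a)" where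
  "psiO w x = negO w (phiO w (negO w x))"
definition smulO :: "'a::euclidean_ring \<Rightarrow> 'a \<Rightarrow> (nat \<Rightarrow> 'a) \<Rightarrow> (nat \<Rightarrow> 'a)" where
  "smulO w c x = (\<lambda>k. (c * x k) mod w^k)"
definition geo :: "'a::euclidean_ring \<Rightarrow> nat \<Rightarrow> nat \<Rightarrow> 'a" where
  "geo w n k = (\<Sum>i<k. w^(n*i))"
definition embF :: "'a::euclidean_ring \<Rightarrow> nat \<Rightarrow> 'a \<Rightarrow> (nat \<Rightarrow> 'a)" where
  "embF w n r = (\<lambda>k. (- (r * geo w n k)) mod w^k)"

definition mmF :: "'a::euclidean_ring \<Rightarrow> (nat \<Rightarrow> 'a) \<Rightarrow> nat \<Rightarrow> 'a" where
  "mmF w x Lv = (- x (Suc Lv)) mod w^(Suc Lv)"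
definition eeF :: "'a::euclidean_ring \<Rightarrow> (nat \<Rightarrow> 'a) \<Rightarrow> nat \<Rightarrow> 'a" where
  "eeF w x Lv = mmF w x Lv div w"

locale comp =
  fixes w :: "'a::unique_euclidean_ring"
  assumes w_nz: "w \<noteq> 0"
    and divmult2: "\<And>a i j. a div (w^i * w^j) = a div w^i div w^j"
    and modmult2: "\<And>a i j. a mod (w^i * w^j) = w^i * (a div w^i mod w^j) + a mod w^i"
    and reduce: "\<And>hi lo j u s. hi mod w^j = hi \<Longrightarrow> lo mod w^s = lo \<Longrightarrow> j < u \<Longrightarrow>
          (hi + w^u * lo) mod (w^(u+s) - 1) = hi + w^u * lo"
    and digitc: "\<And>r r' c n. 1 \<le> n \<Longrightarrow> r mod (w^n - 1) = r \<Longrightarrow> r' mod (w^n - 1) = r' \<Longrightarrow>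
          w*r - r' = c*(w^n - 1) \<Longrightarrow> c mod w = c"
    and fin: "\<And>N. finite {a. a mod w^N = a}"
begin

lemma Obar_mod: assumes "x \<in> Obar w" shows "x k mod w^k = x k"
proof -
  have "x k = x (Suc k) mod w^k" using assms unfolding Obar_def by blast
  then show ?thesis by simp
qed

lemma Obar_le: "x \<in> Obar w \<Longrightarrow> j \<le> k \<Longrightarrow> x j = x k mod w^j"
proof (induction k arbitrary: j)
  case 0 then show ?case using Obar_mod[of x 0] by simp
next
  case (Suc k)
  show ?case
  proof (cases "j = Suc k")
    case True then show ?thesis using Obar_mod[OF Suc.prems(1), of j] by (simp only: )
  next
    case False
    then have "j \<le> k" using Suc.prems by simp
    then have "x j = x k mod w^j" using Suc by blast
    also have "x k = x (Suc k) mod w^k" using Suc.prems(1) unfolding Obar_def by blast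
    also have "x (Suc k) mod w^k mod w^j = x (Suc k) mod w^j"
      by (rule mod_mod_cancel) (simp add: le_imp_power_dvd \<open>j \<le> k\<close>)
    finally show ?thesis .
  qed
qed

lemma Obar_0: "x \<in> Obar w \<Longrightarrow> x 0 = 0"
  using Obar_mod[of x 0] by simp

lemma Obar_lev: "x \<in> Obar w \<Longrightarrow> j \<le> k \<Longrightarrow> x k = a mod w^k \<Longrightarrow> x j = a mod w^j"
  using Obar_le[of x j k] mod_mod_cancel[of "w^j" "w^k" a] le_imp_power_dvd[of j k w] by simp

lemma Obar_agree: "x \<in> Obar w \<Longrightarrow> y \<in> Obar w \<Longrightarrow> x k = y k \<Longrightarrow> j \<le> k \<Longrightarrow> x j = y j"
  using Obar_le[of x j k] Obar_le[of y j k] by simp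

lemma mod_pow_Suc: "a mod w ^ Suc k mod w ^ k = a mod w^k"
  by (rule mod_mod_cancel) (simp add: le_imp_power_dvd)

lemma mod_pow_le: "j \<le> k \<Longrightarrow> a mod w ^ k mod w ^ j = a mod w^j"
  by (rule mod_mod_cancel) (simp add: le_imp_power_dvd)

lemma negO_Obar: assumes "x \<in> Obar w" shows "negO w x \<in> Obar w"
  unfolding Obar_def negO_def
proof (intro CollectI allI)
  fix k
  have "x k = x (Suc k) mod w^k" using assms unfolding Obar_def by blast
  then have "(- x k) mod w ^ k = (- x (Suc k)) mod w^k" by (simp add: mod_minus_eq)
  then show "(- x k) mod w ^ k = (- x (Suc k)) mod w ^ Suc k mod w ^ k"
    by (simp only: mod_pow_Suc)
qed

lemma divmod_w: "(a mod (w * w^k)) div w = (a div w) mod w^k"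
proof -
  have "a mod (w^1 * w^k) = w^1 * (a div w^1 mod w^k) + a mod w^1" by (rule modmult2)
  then have "a mod (w * w^k) = (a div w mod w^k) * w + a mod w" by (simp add: mult.commute)
  then show ?thesis using w_nz by simp
qed

lemma phiO_eq: "x \<in> Obar w \<Longrightarrow> phiO w x k = x (Suc k) div w"
proof (induction k)
  case 0
  have "x 1 mod w = x 1" using Obar_mod[OF 0, of 1] by simp
  then have "x 1 div w = 0" by (metis mod_div_trivial)
  then show ?case by (simp add: phiO_def)
next
  case (Suc k)
  define X where "X = x (Suc (Suc k))"
  have xk: "x (Suc k) = X mod w^(Suc k)" unfolding X_def using Suc.prems Obar_def by blast
  have dig: "digit w x (Suc k) = X div w^Suc k"
  proof -
    have "X - X mod w^Suc k = w^Suc k * (X div w^Suc k)" by (simp add: minus_mod_eq_mult_div)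
    then show ?thesis unfolding digit_def X_def[symmetric] xk using w_nz by simp
  qed
  have "phiO w x (Suc k) = phiO w x k + digit w x (Suc k) * w^k" by (simp add: phiO_def)
  also have "\<dots> = (X mod (w * w^k)) div w + (X div (w * w^k)) * w^k"
    using Suc.IH[OF Suc.prems] dig xk by simp
  also have "X div (w * w^k) = X div w div w^k" using divmult2[of X 1 k] by simp
  also have "(X mod (w * w^k)) div w = (X div w) mod w^k" by (rule divmod_w)
  also have "X div w mod w ^ k + X div w div w ^ k * w ^ k = X div w" by (simp add: mod_div_mult_eq)
  finally show ?case unfolding X_def .
qed


lemma phiO_Obar: assumes "x \<in> Obar w" shows "phiO w x \<in> Obar w"
  unfolding Obar_def
proof (intro CollectI allI)
  fix k
  have "x (Suc k) = x (Suc (Suc k)) mod w^(Suc k)" using assms unfolding Obar_def by blast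
  then have "x (Suc k) = x (Suc (Suc k)) mod (w * w^k)" by simp
  then have "x (Suc k) div w = (x (Suc (Suc k)) div w) mod w^k" using divmod_w by simp
  then show "phiO w x k = phiO w x (Suc k) mod w ^ k" using phiO_eq[OF assms] by simp
qed

lemma psiO_lev: assumes "x \<in> Obar w" shows "psiO w x k = (- ((- x (Suc k)) div w)) mod w^k"
proof -
  have "psiO w x k = (- (negO w x (Suc k) div w)) mod w^k"
    unfolding psiO_def negO_def[of w "phiO w (negO w x)"] using phiO_eq[OF negO_Obar[OF assms]] by simp
  also have "negO w x (Suc k) div w = ((- x (Suc k)) div w) mod w^k"
    unfolding negO_def using divmod_w by simp
  also have "(- ((- x (Suc k)) div w mod w^k)) mod w^k = (- ((- x (Suc k)) div w)) mod w^k"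
    by (simp add: mod_minus_eq)
  finally show ?thesis .
qed

lemma psiO_Obar: "x \<in> Obar w \<Longrightarrow> psiO w x \<in> Obar w"
  unfolding psiO_def by (intro negO_Obar phiO_Obar)

lemma psiO_agree: "x \<in> Obar w \<Longrightarrow> y \<in> Obar w \<Longrightarrow> x (Suc k) = y (Suc k) \<Longrightarrow> psiO w x k = psiO w y k"
  using psiO_lev[of x k] psiO_lev[of y k] by simp

lemma smulO_Obar: assumes "x \<in> Obar w" shows "smulO w c x \<in> Obar w"
  unfolding Obar_def smulO_def
proof (intro CollectI allI)
  fix k
  have "x k = x (Suc k) mod w^k" using assms unfolding Obar_def by blast
  then have "(c * x k) mod w ^ k = (c * x (Suc k)) mod w^k" by (simp add: mod_mult_right_eq)
  then show "(c * x k) mod w ^ k = (c * x (Suc k)) mod w ^ Suc k mod w ^ k"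
    by (simp only: mod_pow_Suc)
qed

lemma geo_mult: "(w^n - 1) * geo w n k = w^(n*k) - 1"
  by (induction k) (simp_all add: geo_def algebra_simps power_add)

lemma embF_Obar: assumes "1 \<le> n" shows "embF w n r \<in> Obar w"
  unfolding Obar_def embF_def
proof (intro CollectI allI)
  fix k
  have "w^k dvd w^(n*k)" using assms by (simp add: le_imp_power_dvd)
  then have d: "w^k dvd (- (r * geo w n (Suc k))) - (- (r * geo w n k))"
    by (simp add: geo_def algebra_simps)
  have "(- (r * geo w n k)) mod w ^ k = (- (r * geo w n (Suc k))) mod w^k"
    using d mod_eq_dvd_iff by (metis dvd_minus_iff minus_diff_eq)
  then show "(- (r * geo w n k)) mod w ^ k = (- (r * geo w n (Suc k))) mod w ^ Suc k mod w ^ k"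
    by (simp only: mod_pow_Suc)
qed

lemma embF_prop: assumes "1 \<le> n" shows "((w^n - 1) * embF w n r k) mod w^k = r mod w^k"
proof -
  have "((w^n - 1) * embF w n r k) mod w^k = ((w^n - 1) * (- (r * geo w n k))) mod w^k"
    unfolding embF_def by (simp add: mod_mult_right_eq)
  also have "(w^n - 1) * (- (r * geo w n k)) = - r * ((w^n - 1) * geo w n k)"
    by (simp add: algebra_simps)
  also have "\<dots> = r - r * w^(n*k)"
    unfolding geo_mult by (simp add: algebra_simps)
  also have "(r - r * w^(n*k)) mod w^k = r mod w^k"
  proof -
    have "w^k dvd w^(n*k)" using assms by (simp add: le_imp_power_dvd)
    then have "w^k dvd (r - r * w^(n*k)) - r" by simp
    then show ?thesis using mod_eq_dvd_iff by blast
  qed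
  finally show ?thesis .
qed

lemma embF_unique: assumes n: "1 \<le> n" and y: "y \<in> Obar w" and h: "\<forall>k. ((w^n - 1) * y k) mod w^k = r mod w^k"
  shows "y = embF w n r"
proof
  fix k
  have "w^k dvd (w^n - 1) * y k - r" using h mod_eq_dvd_iff by blast
  then have a: "w^k dvd geo w n k * ((w^n - 1) * y k - r)" by simp
  have b: "w^k dvd w^(n*k) * y k" using n by (simp add: le_imp_power_dvd)
  have "geo w n k * ((w^n - 1) * y k - r) = ((w^n - 1) * geo w n k) * y k - geo w n k * r"
    by (simp add: algebra_simps)
  also have "\<dots> = w^(n*k) * y k - (y k - (- (r * geo w n k)))"
    unfolding geo_mult by (simp add: algebra_simps)
  finally have "geo w n k * ((w^n - 1) * y k - r) = w^(n*k) * y k - (y k - (- (r * geo w n k)))" .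
  then have "w^k dvd w^(n*k) * y k - (y k - (- (r * geo w n k)))" using a by simp
  then have "w^k dvd w^(n*k) * y k - (w^(n*k) * y k - (y k - (- (r * geo w n k))))"
    using b dvd_diff by blast
  then have "w^k dvd y k - (- (r * geo w n k))" by simp
  then have "y k mod w^k = (- (r * geo w n k)) mod w^k" using mod_eq_dvd_iff by blast
  then show "y k = embF w n r k" unfolding embF_def using Obar_mod[OF y] by simp
qed

lemma embO_eq: assumes "1 \<le> n" shows "embO w (w^n - 1) r = embF w n r"
  unfolding embO_def
proof (rule the_equality)
  show "embF w n r \<in> Obar w \<and> (\<forall>k. ((w ^ n - 1) * embF w n r k) mod w ^ k = r mod w ^ k)"
    using embF_Obar[OF assms] embF_prop[OF assms] by blast
  fix y assume "y \<in> Obar w \<and> (\<forall>k. ((w ^ n - 1) * y k) mod w ^ k = r mod w ^ k)"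
  then show "y = embF w n r" using embF_unique[OF assms] by blast
qed

lemma embF_low: assumes "N \<le> n" shows "embF w n r N = (- r) mod w^N"
proof (cases N)
  case 0 then show ?thesis by (simp add: embF_def)
next
  case (Suc M)
  have "geo w n N = 1 + (\<Sum>i<M. w^(n * Suc i))"
    unfolding geo_def Suc sum.lessThan_Suc_shift by simp
  moreover have "w^N dvd (\<Sum>i<M. w^(n * Suc i))"
  proof (rule dvd_sum)
    fix i assume "i \<in> {..<M}"
    have "N \<le> n * Suc i" using assms by simp
    then show "w^N dvd w^(n * Suc i)" by (simp add: le_imp_power_dvd)
  qed
  ultimately have "w^N dvd - (r * (\<Sum>i<M. w^(n * Suc i)))" by simp
  moreover have "(- (r * geo w n N)) - (- r) = - (r * (\<Sum>i<M. w^(n * Suc i)))"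
    using \<open>geo w n N = _\<close> by (simp add: distrib_left)
  ultimately have "w^N dvd (- (r * geo w n N)) - (- r)" by simp
  then have "(- (r * geo w n N)) mod w^N = (- r) mod w^N" by (simp only: mod_eq_dvd_iff)
  then show ?thesis unfolding embF_def by simp
qed


lemma psi_embF:
  assumes n: "1 \<le> n" and r: "r mod (w^n - 1) = r" and r': "r' mod (w^n - 1) = r'"
    and wr: "(w * r) mod (w^n - 1) = r'"
  shows "psiO w (embF w n r') = embF w n r"
proof -
  define D where "D = w^n - 1"
  define y where "y = embF w n r'"
  have yO: "y \<in> Obar w" unfolding y_def using embF_Obar[OF n] .
  have hy: "\<And>k. w^k dvd D * y k - r'"
    using embF_prop[OF n, of r'] mod_eq_dvd_iff unfolding D_def y_def by blast
  have "D dvd w * r - r'" using wr r' mod_eq_dvd_iff unfolding D_def by metis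
  then obtain c where c: "w * r - r' = c * D" by (metis dvd_def mult.commute)
  have cm: "c mod w = c" using digitc[OF n r r'] c unfolding D_def by blast
  have wn: "w dvd w^n" using n by (simp add: dvd_power)
  have "c - r' = w * (c * (w^n div w) - r)"
  proof -
    have "w * (w^n div w) = w^n" using wn by simp
    then have "w * (c * (w^n div w) - r) = c * w^n - w * r" by (simp add: algebra_simps)
    also have "\<dots> = c - r'" using c unfolding D_def by (simp add: algebra_simps)
    finally show ?thesis by simp
  qed
  then have "w dvd c - r'" by simp
  then have cr: "c = r' mod w" using cm mod_eq_dvd_iff by metis
  show ?thesis unfolding y_def[symmetric]
  proof (rule embF_unique[OF n psiO_Obar[OF yO]], intro allI)
    fix k
    define Y where "Y = y (Suc k)"
    define q where "q = (- Y) div w"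
    define \<rho> where "\<rho> = (- Y) mod w"
    have Yq: "- Y = w * q + \<rho>" unfolding q_def \<rho>_def by (simp add: div_mult_mod_eq)
    have "w dvd w^(Suc k)" by simp
    then have "w dvd D * Y - r'" using hy[of "Suc k"] dvd_trans unfolding Y_def by blast
    moreover have "- Y - r' = (D * Y - r') - w^n * Y" unfolding D_def by (simp add: algebra_simps)
    ultimately have "w dvd - Y - r'" using wn by (metis dvd_diff dvd_mult2)
    then have "\<rho> = r' mod w" unfolding \<rho>_def using mod_eq_dvd_iff by blast
    then have \<rho>c: "\<rho> = c" using cr by simp
    have psk: "psiO w y k = (- q) mod w^k" using psiO_lev[OF yO] unfolding q_def Y_def by simp
    then have "w^k dvd psiO w y k - (- q)" using mod_eq_dvd_iff by (metis mod_mod_trivial)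
    then have "w * w^k dvd w * (psiO w y k + q)" by simp
    then have A: "w^Suc k dvd D * (w * (psiO w y k + q))" by (simp add: dvd_mult2)
    have B: "w^Suc k dvd D * Y - r'" using hy[of "Suc k"] unfolding Y_def .
    have "w * (D * psiO w y k - r) = D * (w * (psiO w y k + q)) + (D * Y - r') + (r' + D * c - w * r)"
    proof -
      have wq: "w * q = - Y - c" using Yq \<rho>c by (simp add: algebra_simps)
      have "D * (w * (psiO w y k + q)) = D * w * psiO w y k + D * (w * q)" by (simp add: algebra_simps)
      also have "\<dots> = D * w * psiO w y k - D * Y - D * c" unfolding wq by (simp add: algebra_simps)
      finally have "D * (w * (psiO w y k + q)) = D * w * psiO w y k - D * Y - D * c" .
      then show ?thesis by (simp add: algebra_simps)
    qed
    also have "r' + D * c - w * r = 0" using c by (simp add: algebra_simps)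
    finally have "w * (D * psiO w y k - r) = D * (w * (psiO w y k + q)) + (D * Y - r')" by simp
    then have "w * w^k dvd w * (D * psiO w y k - r)" using A B by simp
    then have "w^k dvd D * psiO w y k - r" using w_nz by simp
    then show "((w ^ n - 1) * psiO w y k) mod w ^ k = r mod w ^ k"
      using mod_eq_dvd_iff unfolding D_def by blast
  qed
qed

lemma div_small: assumes "b mod w^(s+j) = b" shows "(b div w^s) mod w^j = b div w^s"
proof -
  have e1: "b = w^s * (b div w^s mod w^j) + b mod w^s" using modmult2[of b s j] assms by (simp add: power_add)
  have e2: "b = w^s * (b div w^s) + b mod w^s" by (simp add: div_mult_mod_eq)
  from e1 e2 have "w^s * (b div w^s mod w^j) = w^s * (b div w^s)" by (metis add_right_cancel)
  moreover have "w^s \<noteq> 0" using w_nz by simp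
  ultimately show ?thesis by (metis mult_left_cancel)
qed

lemma rot: assumes "b mod w^(s+j) = b" "j < u"
  shows "(w^u * b) mod (w^(u+s) - 1) = b div w^s + w^u * (b mod w^s)"
proof -
  define hi where "hi = b div w^s"
  define lo where "lo = b mod w^s"
  have b: "b = w^s * hi + lo" unfolding hi_def lo_def by (simp add: div_mult_mod_eq)
  have "w^u * b = (hi + w^u * lo) + (w^(u+s) - 1) * hi" unfolding b by (simp add: algebra_simps power_add)
  then have "(w^u * b) mod (w^(u+s) - 1) = (hi + w^u * lo) mod (w^(u+s) - 1)" by simp
  also have "\<dots> = hi + w^u * lo"
    by (rule reduce[OF _ _ assms(2)]) (use div_small[OF assms(1)] in \<open>simp_all add: hi_def lo_def\<close>)
  finally show ?thesis unfolding hi_def lo_def .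
qed

lemma small_div0: "b mod w^j = b \<Longrightarrow> b div w^j = 0"
proof -
  assume h: "b mod w^j = b"
  have "b = w^j * (b div w^j) + b mod w^j" by (simp add: div_mult_mod_eq)
  then have "w^j * (b div w^j) = 0" using h by simp
  then show ?thesis using w_nz by simp
qed

lemma small_mono: assumes "b mod w^j = b" "j \<le> k" shows "b mod w^k = b"
proof -
  have "b div w^k = b div (w^j * w^(k-j))" using assms(2) by (simp flip: power_add)
  also have "\<dots> = 0" unfolding divmult2 small_div0[OF assms(1)] by simp
  finally have "b div w^k = 0" .
  moreover have "b = w^k * (b div w^k) + b mod w^k" by (simp add: div_mult_mod_eq)
  ultimately show ?thesis by simp
qed


lemma psiO_lev': assumes "x \<in> Obar w" shows "psiO w x k = (- (negO w x (Suc k) div w)) mod w^k"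
  unfolding psiO_def negO_def[of w "phiO w (negO w x)"] using phiO_eq[OF negO_Obar[OF assms]] by simp

lemma red_small: assumes b: "b mod w^j = b" and ij: "i + j \<le> n" and c: "1 \<le> i \<or> j < n"
  shows "(w^i * b) mod (w^n - 1) = w^i * b"
proof (cases "1 \<le> i")
  case True
  have "b mod w^(n - i) = b" using small_mono[OF b] ij by simp
  then have "(0 + w^i * b) mod (w^(i + (n - i)) - 1) = 0 + w^i * b"
    using reduce[of 0 0 b "n - i" i] True by simp
  then show ?thesis using ij by simp
next
  case False
  then have "i = 0" "j < n" using c by auto
  then show ?thesis using reduce[of b j 0 0 n] b by simp
qed

context
  fixes x :: "nat \<Rightarrow> 'a" and Lv :: nat
  assumes xO: "x \<in> Obar w"
begin

lemma mm_small: "(mmF w x Lv) mod w^(Suc Lv) = (mmF w x Lv)" unfolding mmF_def by simp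
lemma ee_small: "(eeF w x Lv) mod w^Lv = (eeF w x Lv)"
  unfolding eeF_def using div_small[of "mmF w x Lv" 1 Lv] mm_small by simp

lemma xN_mm: assumes "N \<le> Suc Lv" shows "w^N dvd x N + (mmF w x Lv)"
proof -
  have "x N = x (Suc Lv) mod w^N" using Obar_le[OF xO assms] .
  then have "x N mod w^N = x (Suc Lv) mod w^N" by simp
  then have a: "w^N dvd x N - x (Suc Lv)" using mod_eq_dvd_iff by blast
  have "(mmF w x Lv) mod w^(Suc Lv) = (- x (Suc Lv)) mod w^(Suc Lv)" unfolding mmF_def by simp
  then have "w^(Suc Lv) dvd (mmF w x Lv) - (- x (Suc Lv))" using mod_eq_dvd_iff by blast
  then have b: "w^N dvd (mmF w x Lv) + x (Suc Lv)" using assms by (metis diff_minus_eq_add dvd_trans le_imp_power_dvd)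
  have "x N + (mmF w x Lv) = (x N - x (Suc Lv)) + ((mmF w x Lv) + x (Suc Lv))" by simp
  then show ?thesis using a b by (metis dvd_add)
qed

lemma G1: assumes "N \<le> Suc Lv" shows "smulO w (w^i) x N = (- (w^i * (mmF w x Lv))) mod w^N"
proof -
  have "w^N dvd w^i * (x N + (mmF w x Lv))" using xN_mm[OF assms] by simp
  then have "w^N dvd w^i * x N - (- (w^i * (mmF w x Lv)))" by (simp add: algebra_simps)
  then show ?thesis unfolding smulO_def using mod_eq_dvd_iff by blast
qed

lemma G3: assumes "N \<le> Lv" shows "smulO w (w^i) (psiO w x) N = (- (w^i * (eeF w x Lv))) mod w^N"
proof -
  have "w^Suc N dvd x (Suc N) + (mmF w x Lv)" using xN_mm[of "Suc N"] assms by simp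
  then have "(- x (Suc N)) mod w^Suc N = (mmF w x Lv) mod w^Suc N"
    using mod_eq_dvd_iff by (metis diff_minus_eq_add minus_add_cancel minus_diff_eq dvd_minus_iff add.commute)
  then have "negO w x (Suc N) = (mmF w x Lv) mod (w * w^N)" unfolding negO_def by simp
  then have "negO w x (Suc N) div w = (eeF w x Lv) mod w^N" unfolding eeF_def using divmod_w by simp
  then have "psiO w x N = (- (eeF w x Lv)) mod w^N" using psiO_lev'[OF xO, of N] by (simp add: mod_minus_eq)
  then show ?thesis unfolding smulO_def by (simp add: mod_mult_right_eq)
qed

lemma G2: assumes K: "1 \<le> K" "i \<le> K" and N: "N \<le> K + Lv + 1"
  shows "embF w (K + Lv + 1) ((w^i * (mmF w x Lv)) mod (w^(K + Lv + 1) - 1)) N = (- (w^i * (mmF w x Lv))) mod w^N"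
proof -
  have "(w^i * (mmF w x Lv)) mod (w^(K + Lv + 1) - 1) = w^i * (mmF w x Lv)"
    by (rule red_small[OF mm_small]) (use K in auto)
  then show ?thesis using embF_low[OF N] by simp
qed

lemma G4: assumes K: "1 \<le> K" "i \<le> K" and N: "N \<le> K + Lv"
  shows "embF w (K + Lv) ((w^i * (eeF w x Lv)) mod (w^(K + Lv) - 1)) N = (- (w^i * (eeF w x Lv))) mod w^N"
proof -
  have "(w^i * (eeF w x Lv)) mod (w^(K + Lv) - 1) = w^i * (eeF w x Lv)"
    by (rule red_small[OF ee_small]) (use K in auto)
  then show ?thesis using embF_low[OF N] by simp
qed

lemma low_drop: assumes "N \<le> u" shows "(- (hi + w^u * lo)) mod w^N = (- hi) mod w^N"
proof -
  have "w^N dvd w^u * lo" using assms by (simp add: le_imp_power_dvd)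
  then have "w^N dvd (- (hi + w^u * lo)) - (- hi)" by simp
  then show ?thesis using mod_eq_dvd_iff by blast
qed

lemma G5a: assumes K: "1 \<le> K" and j: "1 \<le> j" "j \<le> Lv" and N: "N \<le> K"
  shows "embF w (K + Lv + 1) ((w^(K+j) * (mmF w x Lv)) mod (w^(K + Lv + 1) - 1)) N = (- ((mmF w x Lv) div w^(Lv + 1 - j))) mod w^N"
proof -
  have "(mmF w x Lv) mod w^((Lv + 1 - j) + j) = (mmF w x Lv)" using mm_small j by simp
  from rot[OF this, of "K + j"] K
  have "(w^(K+j) * (mmF w x Lv)) mod (w^(K + j + (Lv + 1 - j)) - 1) = (mmF w x Lv) div w^(Lv + 1 - j) + w^(K+j) * ((mmF w x Lv) mod w^(Lv + 1 - j))"
    by simp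
  moreover have "K + j + (Lv + 1 - j) = K + Lv + 1" using j by simp
  ultimately have "(w^(K+j) * (mmF w x Lv)) mod (w^(K + Lv + 1) - 1) = (mmF w x Lv) div w^(Lv + 1 - j) + w^(K+j) * ((mmF w x Lv) mod w^(Lv + 1 - j))"
    by simp
  then show ?thesis using embF_low[of N "K + Lv + 1"] N low_drop[of N "K + j"] by simp
qed

lemma G5b: assumes K: "1 \<le> K" and j: "1 \<le> j" "j \<le> Lv" and N: "N \<le> K"
  shows "embF w (K + Lv) ((w^(K+j) * (eeF w x Lv)) mod (w^(K + Lv) - 1)) N = (- ((mmF w x Lv) div w^(Lv + 1 - j))) mod w^N"
proof -
  have "(eeF w x Lv) mod w^((Lv - j) + j) = (eeF w x Lv)" using ee_small j by simp
  from rot[OF this, of "K + j"] K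
  have "(w^(K+j) * (eeF w x Lv)) mod (w^(K + j + (Lv - j)) - 1) = (eeF w x Lv) div w^(Lv - j) + w^(K+j) * ((eeF w x Lv) mod w^(Lv - j))"
    by simp
  moreover have "K + j + (Lv - j) = K + Lv" using j by simp
  moreover have "(eeF w x Lv) div w^(Lv - j) = (mmF w x Lv) div w^(Lv + 1 - j)"
  proof -
    have "(mmF w x Lv) div (w^1 * w^(Lv - j)) = (mmF w x Lv) div w^1 div w^(Lv - j)" by (rule divmult2)
    moreover have "w^1 * w^(Lv - j) = w^(Lv + 1 - j)"
    proof -
      have "Lv + 1 - j = Suc (Lv - j)" using j by simp
      then show ?thesis by simp
    qed
    ultimately show ?thesis unfolding eeF_def by simp
  qed
  ultimately have "(w^(K+j) * (eeF w x Lv)) mod (w^(K + Lv) - 1) = (mmF w x Lv) div w^(Lv + 1 - j) + w^(K+j) * ((eeF w x Lv) mod w^(Lv - j))"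
    by simp
  then show ?thesis using embF_low[of N "K + Lv"] N low_drop[of N "K + j"] by simp
qed

end

end

lemma int_small: "(b::int) mod w^j = b \<Longrightarrow> w \<ge> 2 \<Longrightarrow> 0 \<le> b \<and> b < w^j"
  by (metis pos_mod_bound pos_mod_sign zero_less_power order_less_le_trans zero_less_numeral)

lemma comp_int: assumes w: "(w::int) \<ge> 2" shows "comp w"
proof
  show "w \<noteq> 0" using w by simp
  fix a :: int and i j :: nat
  show "a div (w^i * w^j) = a div w^i div w^j" using w by (simp add: zdiv_zmult2_eq)
  show "a mod (w^i * w^j) = w^i * (a div w^i mod w^j) + a mod w^i" using w by (simp add: zmod_zmult2_eq)
next
  fix hi lo :: int and j u s :: nat
  assume h: "hi mod w^j = hi" and l: "lo mod w^s = lo" and ju: "j < u"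
  from int_small[OF h w] have h1: "0 \<le> hi" "hi \<le> w^j - 1" by auto
  from int_small[OF l w] have l1: "0 \<le> lo" "lo \<le> w^s - 1" by auto
  have wu: "w^j < w^u" using ju w by (simp add: power_strict_increasing)
  have p0: "0 \<le> w^u" using w by simp
  have "w^u * lo \<le> w^u * (w^s - 1)" using l1 p0 by (simp add: mult_left_mono)
  then have "hi + w^u * lo \<le> w^j - 1 + (w^(u+s) - w^u)" using h1 by (simp add: algebra_simps power_add)
  then have lt: "hi + w^u * lo < w^(u+s) - 1" using wu by simp
  have "0 \<le> hi + w^u * lo" using h1 l1 p0 by simp
  then show "(hi + w^u * lo) mod (w^(u+s) - 1) = hi + w^u * lo" using lt by simp
next
  fix r r' c :: int and n :: nat
  assume n: "1 \<le> n" and r: "r mod (w^n - 1) = r" and r': "r' mod (w^n - 1) = r'"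
    and c: "w*r - r' = c*(w^n - 1)"
  have "w^1 < w^n \<or> n = 1" using n w by (metis le_neq_implies_less power_strict_increasing one_less_numeral_iff semiring_norm(76) order_less_le_trans)
  then have Dp: "w^n - 1 > 0" using w by auto
  have r0: "0 \<le> r" "r < w^n - 1" using r Dp by (metis pos_mod_bound pos_mod_sign)+
  have r0': "0 \<le> r'" "r' < w^n - 1" using r' Dp by (metis pos_mod_bound pos_mod_sign)+
  have c0: "0 \<le> c"
  proof (rule ccontr)
    assume "\<not> 0 \<le> c"
    then have "c \<le> -1" by simp
    then have "c * (w^n - 1) \<le> -1 * (w^n - 1)" by (rule mult_right_mono) (use Dp in simp)
    moreover have "w * r \<ge> 0" using w r0 by simp
    ultimately show False using c r0' by (smt (verit))
  qed
  have c1: "c < w"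
  proof (rule ccontr)
    assume "\<not> c < w"
    then have "w * (w^n - 1) \<le> c * (w^n - 1)" by (intro mult_right_mono) (use Dp in simp_all)
    moreover have "w * r < w * (w^n - 1)" using w r0 by simp
    ultimately show False using c r0' by (smt (verit))
  qed
  show "c mod w = c" using c0 c1 by (rule mod_pos_pos_trivial)
next
  fix N
  have "{a. a mod w^N = a} \<subseteq> {0..<w^N}"
  proof
    fix a assume "a \<in> {a. a mod w^N = a}"
    then have "a mod w^N = a" by simp
    from int_small[OF this w] show "a \<in> {0..<w^N}" by simp
  qed
  then show "finite {a. a mod w^N = a}" by (rule finite_subset) simp
qed

lemma poly_small: "(b::'f::field poly) mod m = b \<Longrightarrow> m \<noteq> 0 \<Longrightarrow> b = 0 \<or> degree b < degree m"
  by (metis degree_mod_less')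

lemma degree_pow_minus1: assumes "degree (w::'f::field poly) \<ge> 1" "k \<ge> 1"
  shows "degree (w^k - 1) = k * degree w"
proof -
  have w0: "w \<noteq> 0" using assms by auto
  have dk: "degree (w^k) = k * degree w" using degree_power_eq[OF w0] .
  have "degree (w^k + (- 1)) = degree (w^k)"
    by (rule degree_add_eq_left) (use dk assms in simp)
  then show ?thesis using dk by simp
qed

lemma finite_degree_le: "finite {p::'f::{field,finite} poly. degree p \<le> d}"
proof -
  have "coeffs ` {p::'f poly. degree p \<le> d} \<subseteq> {xs. set xs \<subseteq> UNIV \<and> length xs \<le> Suc d}"
  proof (clarsimp)
    fix p :: "'f poly" assume "degree p \<le> d"
    then show "length (coeffs p) \<le> Suc d" by (cases "p = 0") (simp_all add: length_coeffs_degree)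
  qed
  then have "finite (coeffs ` {p::'f poly. degree p \<le> d})"
    by (rule finite_subset) (rule finite_lists_length_le, simp)
  moreover have "inj_on coeffs {p::'f poly. degree p \<le> d}" by (simp add: inj_on_def coeffs_eq_iff)
  ultimately show ?thesis using finite_imageD by blast
qed

lemma comp_poly: assumes dw: "degree (w::'f::{field,finite} poly) \<ge> 1" shows "comp w"
proof
  have w0: "w \<noteq> 0" using dw by auto
  then show "w \<noteq> 0" .
  have dpow: "\<And>k. degree (w^k) = k * degree w" using degree_power_eq[OF w0] .
  have pnz: "\<And>k. w^k \<noteq> 0" using w0 by simp
  {
  fix a :: "'f poly" and i j :: nat
  show "a div (w^i * w^j) = a div w^i div w^j" by (rule poly_div_mult_right)
  show "a mod (w^i * w^j) = w^i * (a div w^i mod w^j) + a mod w^i" by (rule poly_mod_mult_right)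
  }
  {
  fix hi lo :: "'f poly" and j u s :: nat
  assume h: "hi mod w^j = hi" and l: "lo mod w^s = lo" and ju: "j < u"
  have u1: "u + s \<ge> 1" using ju by simp
  have dD: "degree (w^(u+s) - 1) = (u+s) * degree w" using degree_pow_minus1[OF dw u1] .
  have dh: "degree hi < (u+s) * degree w"
  proof (cases "hi = 0")
    case True then show ?thesis using dw ju by simp
  next
    case False
    then have "degree hi < j * degree w" using poly_small[OF h pnz] dpow by simp
    also have "\<dots> \<le> (u+s) * degree w" using ju by simp
    finally show ?thesis .
  qed
  have dl: "degree (w^u * lo) < (u+s) * degree w"
  proof (cases "lo = 0")
    case True then show ?thesis using dw ju by simp
  next
    case False
    then have "degree lo < s * degree w" using poly_small[OF l pnz] dpow by simp
    moreover have "degree (w^u * lo) = u * degree w + degree lo" using False pnz dpow by (simp add: degree_mult_eq)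
    ultimately show ?thesis by (simp add: algebra_simps)
  qed
  have "degree (hi + w^u * lo) < degree (w^(u+s) - 1)"
    using degree_add_le_max[of hi "w^u * lo"] dh dl dD by simp
  then show "(hi + w^u * lo) mod (w^(u+s) - 1) = hi + w^u * lo" by (rule mod_poly_less)
  }
  {
  fix r r' c :: "'f poly" and n :: nat
  assume n: "1 \<le> n" and r: "r mod (w^n - 1) = r" and r': "r' mod (w^n - 1) = r'"
    and c: "w*r - r' = c*(w^n - 1)"
  have dD: "degree (w^n - 1) = n * degree w" using degree_pow_minus1[OF dw n] .
  have D0: "w^n - 1 \<noteq> 0" using dD n dw by (metis degree_0 mult_eq_0_iff not_one_le_zero)
  show "c mod w = c"
  proof (cases "c = 0")
    case True then show ?thesis by simp
  next
    case False
    have dc: "degree (c * (w^n - 1)) = degree c + n * degree w" using False D0 dD by (simp add: degree_mult_eq)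
    have d1: "degree (w * r) < degree w + n * degree w"
    proof (cases "r = 0")
      case True then show ?thesis using dw n by simp
    next
      case False
      then have "degree r < n * degree w" using poly_small[OF r D0] dD by simp
      then show ?thesis using False w0 by (simp add: degree_mult_eq)
    qed
    have d2: "degree r' < degree w + n * degree w"
    proof (cases "r' = 0")
      case True then show ?thesis using dw n by simp
    next
      case False
      then have "degree r' < n * degree w" using poly_small[OF r' D0] dD by simp
      then show ?thesis by simp
    qed
    have "degree (w * r - r') < degree w + n * degree w"
      using degree_diff_le_max[of "w * r" r'] d1 d2 by simp
    then have "degree c < degree w" using c dc by simp
    then show ?thesis by (rule mod_poly_less)
  qed
  }
  {
  fix N
  have "{a. a mod w^N = a} \<subseteq> {p. degree p \<le> N * degree w}"
  proof
    fix a assume "a \<in> {a. a mod w^N = a}"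
    then have "a mod w^N = a" by simp
    from poly_small[OF this pnz] show "a \<in> {p. degree p \<le> N * degree w}" using dpow by auto
  qed
  then show "finite {a. a mod w^N = a}" by (rule finite_subset) (rule finite_degree_le)
  }
qed

locale vf =
  fixes absv :: "'k::field \<Rightarrow> real"
  assumes K: "nonarch_complete_field absv"
begin

lemma av_nonneg: "0 \<le> absv x" using K unfolding nonarch_complete_field_def by blast
lemma av_zero_iff: "absv x = 0 \<longleftrightarrow> x = 0" using K unfolding nonarch_complete_field_def by blast
lemma av_mult: "absv (x * y) = absv x * absv y" using K unfolding nonarch_complete_field_def by blast
lemma av_ultra: "absv (x + y) \<le> max (absv x) (absv y)" using K unfolding nonarch_complete_field_def by blast
lemma av_complete: fixes s :: "nat \<Rightarrow> 'k" shows "(\<forall>e>0. \<exists>N. \<forall>m\<ge>N. \<forall>n\<ge>N. absv (s m - s n) < e) \<Longrightarrow>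
        (\<exists>L. \<forall>e>0. \<exists>N. \<forall>n\<ge>N. absv (s n - L) < e)"
proof -
  assume h: "\<forall>e>0. \<exists>N. \<forall>m\<ge>N. \<forall>n\<ge>N. absv (s m - s n) < e"
  have "\<forall>s::nat \<Rightarrow> 'k. (\<forall>e>0. \<exists>N. \<forall>m\<ge>N. \<forall>n\<ge>N. absv (s m - s n) < e) \<longrightarrow>
        (\<exists>L. \<forall>e>0. \<exists>N. \<forall>n\<ge>N. absv (s n - L) < e)"
    using K unfolding nonarch_complete_field_def by (elim conjE)
  then show ?thesis using h by (metis (no_types))
qed

lemma av_0[simp]: "absv 0 = 0" using av_zero_iff by simp
lemma av_pos: "x \<noteq> 0 \<Longrightarrow> 0 < absv x" using av_nonneg av_zero_iff by (metis less_eq_real_def)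

lemma av_1[simp]: "absv 1 = 1"
proof -
  have "absv 1 = absv 1 * absv 1" using av_mult[of 1 1] by simp
  moreover have "absv 1 \<noteq> 0" using av_zero_iff by simp
  ultimately show ?thesis by simp
qed

lemma av_minus1: "absv (-1) = 1"
proof -
  have "absv (-1) * absv (-1) = 1" using av_mult[of "-1" "-1"] by simp
  moreover have "sqrt (absv (-1) * absv (-1)) = absv (-1)" using av_nonneg[of "-1"] by simp
  ultimately show ?thesis by simp
qed

lemma av_minus[simp]: "absv (- x) = absv x"
  using av_mult[of "-1" x] av_minus1 by simp

lemma av_commute: "absv (x - y) = absv (y - x)"
  using av_minus[of "x - y"] by simp

lemma av_inverse: "absv (inverse x) = inverse (absv x)"
proof (cases "x = 0")
  case True then show ?thesis by simp
next
  case False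
  then have h: "absv x * absv (inverse x) = 1" using av_mult[of x "inverse x"] by simp
  have "absv x \<noteq> 0" using False av_zero_iff by simp
  then show ?thesis using h by (metis inverse_unique)
qed

lemma av_divide: "absv (x / y) = absv x / absv y"
  by (simp add: divide_inverse av_mult av_inverse)

lemma av_add_lt: "absv a < e \<Longrightarrow> absv b < e \<Longrightarrow> absv (a + b) < e"
  using av_ultra[of a b] by simp

lemma av_diff_lt: "absv a < e \<Longrightarrow> absv b < e \<Longrightarrow> absv (a - b) < e"
  using av_add_lt[of a e "- b"] by simp

lemma av_eq_of_close: assumes "absv (x - y) < absv y" shows "absv x = absv y"
proof -
  have "absv x \<le> max (absv (x - y)) (absv y)" using av_ultra[of "x - y" y] by simp
  then have a: "absv x \<le> absv y" using assms by simp
  have "absv y \<le> max (absv (y - x)) (absv x)" using av_ultra[of "y - x" x] by simp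
  then have "absv y \<le> absv x" using assms av_commute[of x y] by (auto simp: max_def split: if_splits)
  then show ?thesis using a by simp
qed

definition near1 :: "real \<Rightarrow> 'k \<Rightarrow> bool" where "near1 e a \<longleftrightarrow> absv (a - 1) < e"

lemma near1_mono: "near1 e a \<Longrightarrow> e \<le> e' \<Longrightarrow> near1 e' a"
  unfolding near1_def by simp

lemma near1_one[simp]: "0 < e \<Longrightarrow> near1 e 1" unfolding near1_def by simp

lemma near1_abs: assumes "e \<le> 1" "near1 e a" shows "absv a = 1"
  using av_eq_of_close[of a 1] assms unfolding near1_def by simp

lemma near1_nz: "e \<le> 1 \<Longrightarrow> near1 e a \<Longrightarrow> a \<noteq> 0"
  using near1_abs by fastforce

lemma near1_mult: assumes e: "e \<le> 1" and a: "near1 e a" and b: "near1 e b" shows "near1 e (a * b)"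
proof -
  have "a * b - 1 = (a - 1) * (b - 1) + ((a - 1) + (b - 1))" by (simp add: algebra_simps)
  moreover have "absv ((a - 1) * (b - 1)) < e"
  proof -
    have "absv ((a - 1) * (b - 1)) = absv (a - 1) * absv (b - 1)" by (rule av_mult)
    also have "\<dots> \<le> absv (a - 1) * 1" using b e av_nonneg unfolding near1_def
      by (intro mult_left_mono) auto
    also have "\<dots> < e" using a unfolding near1_def by simp
    finally show ?thesis .
  qed
  moreover have "absv ((a - 1) + (b - 1)) < e" using a b unfolding near1_def by (intro av_add_lt)
  ultimately show ?thesis unfolding near1_def by (metis av_add_lt)
qed

lemma near1_prod: assumes "0 < e" "e \<le> 1" "\<And>i. i \<in> S \<Longrightarrow> near1 e (f i)" shows "near1 e (\<Prod>i\<in>S. f i)"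
  using assms(3)
proof (induction S rule: infinite_finite_induct)
  case (infinite A) then show ?case using assms by simp
next
  case empty then show ?case using assms by simp
next
  case (insert x F) then show ?case using near1_mult[OF assms(2)] by simp
qed

lemma near1_inverse: assumes e: "e \<le> 1" and a: "near1 e a" shows "near1 e (inverse a)"
proof -
  have a0: "a \<noteq> 0" using near1_nz[OF e a] .
  have "inverse a - 1 = - (a - 1) / a" using a0 by (simp add: field_simps)
  then have "absv (inverse a - 1) = absv (- (a - 1)) / absv a" by (simp only: av_divide)
  then have "absv (inverse a - 1) = absv (a - 1) / absv a" by (simp only: av_minus)
  then show ?thesis using near1_abs[OF e a] a unfolding near1_def by simp
qed

lemma near1_div: "e \<le> 1 \<Longrightarrow> near1 e a \<Longrightarrow> near1 e b \<Longrightarrow> near1 e (a / b)"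
  by (simp add: divide_inverse near1_mult near1_inverse)

lemma near1_eq1: assumes "\<And>e. 0 < e \<Longrightarrow> near1 e a" shows "a = 1"
proof (rule ccontr)
  assume "a \<noteq> 1"
  then have "0 < absv (a - 1)" using av_pos by simp
  then show False using assms[of "absv (a - 1)"] unfolding near1_def by simp
qed

lemma near1_iff: assumes "a \<noteq> 0" shows "near1 e (b / a) \<longleftrightarrow> absv (b - a) < e * absv a"
proof -
  have "b / a - 1 = (b - a) / a" using assms by (simp add: field_simps)
  then have "absv (b / a - 1) = absv (b - a) / absv a" by (simp add: av_divide)
  then show ?thesis unfolding near1_def using av_pos[OF assms] by (simp add: pos_divide_less_eq)
qed

lemma lim_exists:
  fixes s :: "nat \<Rightarrow> 'k"
  assumes nz: "\<And>K. s K \<noteq> 0"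
    and cau: "\<And>e. 0 < e \<Longrightarrow> \<exists>N. \<forall>K K'. N \<le> K \<longrightarrow> K \<le> K' \<longrightarrow> near1 e (s K' / s K)"
  shows "\<exists>L. L \<noteq> 0 \<and> (\<forall>e>0. \<exists>N. \<forall>K\<ge>N. near1 e (L / s K))"
proof -
  obtain N1 where N1: "\<And>K K'. N1 \<le> K \<Longrightarrow> K \<le> K' \<Longrightarrow> near1 1 (s K' / s K)" using cau[of 1] by auto
  define cc where "cc = absv (s N1)"
  have cc0: "0 < cc" unfolding cc_def using av_pos nz by blast
  have absK: "absv (s K) = cc" if "N1 \<le> K" for K
  proof -
    have "absv (s K / s N1) = 1" using near1_abs[OF _ N1[OF _ that]] by simp
    then show ?thesis unfolding cc_def using nz[of N1] av_pos[of "s N1"] by (simp add: av_divide)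
  qed
  have diff: "absv (s K' - s K) < e * cc" if "0 < e" "e \<le> 1" "N1 \<le> K" "K \<le> K'"
       "\<forall>K K'. N \<le> K \<longrightarrow> K \<le> K' \<longrightarrow> near1 e (s K' / s K)" "N \<le> K" for e N K K'
  proof -
    have "near1 e (s K' / s K)" using that by blast
    then show ?thesis using near1_iff[OF nz[of K]] absK[OF that(3)] by simp
  qed
  have "\<forall>e>0. \<exists>N. \<forall>m\<ge>N. \<forall>n\<ge>N. absv (s m - s n) < e"
  proof (intro allI impI)
    fix e :: real assume e: "0 < e"
    define e' where "e' = min 1 (e / cc)"
    have e'0: "0 < e'" unfolding e'_def using e cc0 by simp
    obtain N2 where N2: "\<forall>K K'. N2 \<le> K \<longrightarrow> K \<le> K' \<longrightarrow> near1 e' (s K' / s K)" using cau[OF e'0] by blast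
    have "\<forall>m\<ge>max N1 N2. \<forall>n\<ge>max N1 N2. absv (s m - s n) < e"
    proof (intro allI impI)
      fix m n assume m: "max N1 N2 \<le> m" and n: "max N1 N2 \<le> n"
      have ecc: "e' * cc \<le> e" unfolding e'_def using cc0 by (simp add: min_def field_simps)
      show "absv (s m - s n) < e"
      proof (cases "n \<le> m")
        case True
        have "absv (s m - s n) < e' * cc" by (rule diff[OF e'0 _ _ True N2]) (use m n e'_def in auto)
        then show ?thesis using ecc by simp
      next
        case False
        have "absv (s n - s m) < e' * cc" by (rule diff[OF e'0 _ _ _ N2]) (use m n e'_def False in auto)
        then show ?thesis using ecc av_commute[of "s n" "s m"] by simp
      qed
    qed
    then show "\<exists>N. \<forall>m\<ge>N. \<forall>n\<ge>N. absv (s m - s n) < e" by blast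
  qed
  then obtain L where L: "\<And>e. 0 < e \<Longrightarrow> \<exists>N. \<forall>n\<ge>N. absv (s n - L) < e" using av_complete by blast
  have L0: "L \<noteq> 0"
  proof -
    obtain N where N: "\<forall>n\<ge>N. absv (s n - L) < cc" using L[OF cc0] by blast
    have "absv (s (max N N1) - L) < cc" using N by simp
    then have "absv (L - s (max N N1)) < absv (s (max N N1))"
      using absK[of "max N N1"] av_commute[of L "s (max N N1)"] by simp
    from av_eq_of_close[OF this] have "absv L = cc" using absK[of "max N N1"] by simp
    then show ?thesis using cc0 by auto
  qed
  have "\<forall>e>0. \<exists>N. \<forall>K\<ge>N. near1 e (L / s K)"
  proof (intro allI impI)
    fix e :: real assume e: "0 < e"
    define e' where "e' = min 1 e"
    have e'0: "0 < e'" unfolding e'_def using e by simp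
    obtain N2 where N2: "\<forall>K K'. N2 \<le> K \<longrightarrow> K \<le> K' \<longrightarrow> near1 e' (s K' / s K)" using cau[OF e'0] by blast
    have ecc0: "0 < e' * cc" using e'0 cc0 by simp
    obtain N3 where N3: "\<forall>n\<ge>N3. absv (s n - L) < e' * cc" using L[OF ecc0] by blast
    have "\<forall>K\<ge>max N1 N2. near1 e (L / s K)"
    proof (intro allI impI)
      fix K assume K: "max N1 N2 \<le> K"
      define K' where "K' = max K N3"
      have "absv (s K' - L) < e' * cc" using N3 unfolding K'_def by simp
      then have a1: "absv (L - s K') < e' * cc" using av_commute[of L "s K'"] by simp
      have a2: "absv (s K' - s K) < e' * cc" by (rule diff[OF e'0 _ _ _ N2]) (use K K'_def e'_def in auto)
      have "absv ((L - s K') + (s K' - s K)) < e' * cc" using a1 a2 by (rule av_add_lt)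
      then have "absv (L - s K) < e' * absv (s K)" using absK[of K] K by simp
      then have "near1 e' (L / s K)" using near1_iff[OF nz[of K]] by simp
      then show "near1 e (L / s K)" using near1_mono e'_def by simp
    qed
    then show "\<exists>N. \<forall>K\<ge>N. near1 e (L / s K)" by blast
  qed
  then show ?thesis using L0 by blast
qed

end

lemma finite_funs: assumes "\<And>t. t < m \<Longrightarrow> finite (S t)"
  shows "finite {f :: nat \<Rightarrow> 'a::zero. (\<forall>t<m. f t \<in> S t) \<and> (\<forall>t. m \<le> t \<longrightarrow> f t = 0)}"
  using assms
proof (induction m)
  case 0
  have "{f :: nat \<Rightarrow> 'a. (\<forall>t<0. f t \<in> S t) \<and> (\<forall>t. 0 \<le> t \<longrightarrow> f t = 0)} = {\<lambda>_. 0}" by auto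
  then show ?case by simp
next
  case (Suc m)
  let ?A = "{f :: nat \<Rightarrow> 'a. (\<forall>t<m. f t \<in> S t) \<and> (\<forall>t. m \<le> t \<longrightarrow> f t = 0)}"
  have "{f :: nat \<Rightarrow> 'a. (\<forall>t<Suc m. f t \<in> S t) \<and> (\<forall>t. Suc m \<le> t \<longrightarrow> f t = 0)}
        \<subseteq> (\<lambda>(f, a). f(m := a)) ` (?A \<times> S m)"
  proof
    fix f :: "nat \<Rightarrow> 'a" assume f: "f \<in> {f. (\<forall>t<Suc m. f t \<in> S t) \<and> (\<forall>t. Suc m \<le> t \<longrightarrow> f t = 0)}"
    have "f = (\<lambda>(f, a). f(m := a)) (f(m := 0), f m)" by simp
    moreover have "(f(m := 0), f m) \<in> ?A \<times> S m" using f by auto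
    ultimately show "f \<in> (\<lambda>(f, a). f(m := a)) ` (?A \<times> S m)" by blast
  qed
  moreover have "finite (?A \<times> S m)" using Suc by simp
  ultimately show ?case using finite_subset by blast
qed

locale prodsp =
  fixes mZ mA :: nat and PZ :: "nat \<Rightarrow> int" and PA :: "nat \<Rightarrow> 'f::{field,finite} poly"
  assumes PZ2: "\<And>t. t < mZ \<Longrightarrow> PZ t \<ge> 2"
    and PAd: "\<And>t. t < mA \<Longrightarrow> degree (PA t) \<ge> 1"
begin

lemma cZ: "t < mZ \<Longrightarrow> comp (PZ t)" using comp_int PZ2 by blast
lemma cA: "t < mA \<Longrightarrow> comp (PA t)" using comp_poly PAd by blast

abbreviation "X \<equiv> ObarP mZ mA PZ PA"

definition agr :: "nat \<Rightarrow> 'f obar \<Rightarrow> 'f obar \<Rightarrow> bool" where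
  "agr N x y \<longleftrightarrow> (\<forall>t<mZ. fst x t N = fst y t N) \<and> (\<forall>t<mA. snd x t N = snd y t N)"

definition psiP :: "'f obar \<Rightarrow> 'f obar" where
  "psiP x = negP mZ mA PZ PA (phiP mZ mA PZ PA (negP mZ mA PZ PA x))"

definition smulP :: "nat \<Rightarrow> 'f obar \<Rightarrow> 'f obar" where
  "smulP k x = ((\<lambda>t. if t < mZ then smulO (PZ t) (PZ t ^ k) (fst x t) else (\<lambda>_. 0)),
                (\<lambda>t. if t < mA then smulO (PA t) (PA t ^ k) (snd x t) else (\<lambda>_. 0)))"

definition zeroP :: "'f obar" where "zeroP = ((\<lambda>t _. 0), (\<lambda>t _. 0))"

abbreviation "fr \<equiv> fracP mZ mA PZ PA"

lemma X_iff: "x \<in> X \<longleftrightarrow> (\<forall>t<mZ. fst x t \<in> Obar (PZ t)) \<and> (\<forall>t. mZ \<le> t \<longrightarrow> fst x t = (\<lambda>_. 0)) \<and>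
      (\<forall>t<mA. snd x t \<in> Obar (PA t)) \<and> (\<forall>t. mA \<le> t \<longrightarrow> snd x t = (\<lambda>_. 0))"
  unfolding ObarP_def by (cases x) simp

lemma XZ: "x \<in> X \<Longrightarrow> t < mZ \<Longrightarrow> fst x t \<in> Obar (PZ t)" using X_iff by blast
lemma XA: "x \<in> X \<Longrightarrow> t < mA \<Longrightarrow> snd x t \<in> Obar (PA t)" using X_iff by blast
lemma XZ0: "x \<in> X \<Longrightarrow> \<not> t < mZ \<Longrightarrow> fst x t = (\<lambda>_. 0)" using X_iff by simp
lemma XA0: "x \<in> X \<Longrightarrow> \<not> t < mA \<Longrightarrow> snd x t = (\<lambda>_. 0)" using X_iff by simp

lemma X_eqI: assumes "x \<in> X" "y \<in> X" "\<And>t. t < mZ \<Longrightarrow> fst x t = fst y t" "\<And>t. t < mA \<Longrightarrow> snd x t = snd y t"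
  shows "x = y"
proof -
  have "fst x = fst y"
  proof
    fix t show "fst x t = fst y t" using assms XZ0 by (cases "t < mZ") auto
  qed
  moreover have "snd x = snd y"
  proof
    fix t show "snd x t = snd y t" using assms XA0 by (cases "t < mA") auto
  qed
  ultimately show ?thesis by (simp add: prod_eq_iff)
qed

lemma XI: assumes "\<And>t. t < mZ \<Longrightarrow> fst x t \<in> Obar (PZ t)" "\<And>t. \<not> t < mZ \<Longrightarrow> fst x t = (\<lambda>_. 0)"
   "\<And>t. t < mA \<Longrightarrow> snd x t \<in> Obar (PA t)" "\<And>t. \<not> t < mA \<Longrightarrow> snd x t = (\<lambda>_. 0)"
 shows "x \<in> X"
  unfolding X_iff using assms by (meson not_le)

lemma agr_refl: "agr N x x" unfolding agr_def by simp
lemma agr_sym: "agr N x y \<Longrightarrow> agr N y x" unfolding agr_def by simp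
lemma agr_trans: "agr N x y \<Longrightarrow> agr N y z \<Longrightarrow> agr N x z" unfolding agr_def by simp
lemma agr_mono: assumes x: "x \<in> X" and y: "y \<in> X" and a: "agr N x y" and M: "M \<le> N" shows "agr M x y"
  unfolding agr_def
proof (intro conjI allI impI)
  fix t assume t: "t < mZ"
  show "fst x t M = fst y t M"
    using comp.Obar_agree[OF cZ[OF t] XZ[OF x t] XZ[OF y t]] a M t unfolding agr_def by blast
next
  fix t assume t: "t < mA"
  show "snd x t M = snd y t M"
    using comp.Obar_agree[OF cA[OF t] XA[OF x t] XA[OF y t]] a M t unfolding agr_def by blast
qed

lemma agr_0: assumes x: "x \<in> X" and y: "y \<in> X" shows "agr 0 x y"
  unfolding agr_def
proof (intro conjI allI impI)
  fix t assume t: "t < mZ"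
  show "fst x t 0 = fst y t 0"
    using comp.Obar_0[OF cZ[OF t] XZ[OF x t]] comp.Obar_0[OF cZ[OF t] XZ[OF y t]] by simp
next
  fix t assume t: "t < mA"
  show "snd x t 0 = snd y t 0"
    using comp.Obar_0[OF cA[OF t] XA[OF x t]] comp.Obar_0[OF cA[OF t] XA[OF y t]] by simp
qed

lemma zeroP_X: "zeroP \<in> X"
  by (rule XI) (simp_all add: zeroP_def Obar_def)

lemma psiP_fst: "fst (psiP x) t = (if t < mZ then psiO (PZ t) (fst x t) else (\<lambda>_. 0))"
  unfolding psiP_def negP_def phiP_def psiO_def by simp
lemma psiP_snd: "snd (psiP x) t = (if t < mA then psiO (PA t) (snd x t) else (\<lambda>_. 0))"
  unfolding psiP_def negP_def phiP_def psiO_def by simp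

lemma psiP_X: assumes x: "x \<in> X" shows "psiP x \<in> X"
proof (rule XI)
  fix t assume t: "t < mZ"
  show "fst (psiP x) t \<in> Obar (PZ t)" using comp.psiO_Obar[OF cZ[OF t] XZ[OF x t]] t by (simp add: psiP_fst)
next
  fix t assume t: "t < mA"
  show "snd (psiP x) t \<in> Obar (PA t)" using comp.psiO_Obar[OF cA[OF t] XA[OF x t]] t by (simp add: psiP_snd)
qed (simp_all add: psiP_fst psiP_snd)

lemma psiP_agr: assumes x: "x \<in> X" and y: "y \<in> X" and a: "agr (Suc N) x y" shows "agr N (psiP x) (psiP y)"
  unfolding agr_def
proof (intro conjI allI impI)
  fix t assume t: "t < mZ"
  show "fst (psiP x) t N = fst (psiP y) t N"
    using comp.psiO_agree[OF cZ[OF t] XZ[OF x t] XZ[OF y t]] a t unfolding agr_def by (simp add: psiP_fst)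
next
  fix t assume t: "t < mA"
  show "snd (psiP x) t N = snd (psiP y) t N"
    using comp.psiO_agree[OF cA[OF t] XA[OF x t] XA[OF y t]] a t unfolding agr_def by (simp add: psiP_snd)
qed

lemma smulP_fst: "fst (smulP k x) t = (if t < mZ then smulO (PZ t) (PZ t ^ k) (fst x t) else (\<lambda>_. 0))"
  unfolding smulP_def by simp
lemma smulP_snd: "snd (smulP k x) t = (if t < mA then smulO (PA t) (PA t ^ k) (snd x t) else (\<lambda>_. 0))"
  unfolding smulP_def by simp

lemma smulP_X: assumes x: "x \<in> X" shows "smulP k x \<in> X"
proof (rule XI)
  fix t assume t: "t < mZ"
  show "fst (smulP k x) t \<in> Obar (PZ t)" using comp.smulO_Obar[OF cZ[OF t] XZ[OF x t]] t by (simp add: smulP_fst)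
next
  fix t assume t: "t < mA"
  show "snd (smulP k x) t \<in> Obar (PA t)" using comp.smulO_Obar[OF cA[OF t] XA[OF x t]] t by (simp add: smulP_snd)
qed (simp_all add: smulP_fst smulP_snd)

lemma smulP_agr: "agr N x y \<Longrightarrow> agr N (smulP k x) (smulP k y)"
  unfolding agr_def smulP_fst smulP_snd smulO_def by simp

lemma smulP_zero: "agr k (smulP k x) zeroP"
  unfolding agr_def smulP_fst smulP_snd smulO_def zeroP_def by simp

lemma smulP_0: assumes "x \<in> X" shows "smulP 0 x = x"
proof (rule X_eqI[OF smulP_X[OF assms] assms])
  fix t assume t: "t < mZ"
  show "fst (smulP 0 x) t = fst x t"
    unfolding smulP_fst smulO_def using t comp.Obar_mod[OF cZ[OF t] XZ[OF assms t]] by auto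
next
  fix t assume t: "t < mA"
  show "snd (smulP 0 x) t = snd x t"
    unfolding smulP_snd smulO_def using t comp.Obar_mod[OF cA[OF t] XA[OF assms t]] by auto
qed

lemma fr_fst: "1 \<le> n \<Longrightarrow> t < mZ \<Longrightarrow> fst (fr n bz ba) t = embF (PZ t) n (bz t mod (PZ t ^ n - 1))"
  unfolding fracP_def using comp.embO_eq[OF cZ] by simp
lemma fr_snd: "1 \<le> n \<Longrightarrow> t < mA \<Longrightarrow> snd (fr n bz ba) t = embF (PA t) n (ba t mod (PA t ^ n - 1))"
  unfolding fracP_def using comp.embO_eq[OF cA] by simp
lemma fr_fst0: "\<not> t < mZ \<Longrightarrow> fst (fr n bz ba) t = (\<lambda>_. 0)" unfolding fracP_def by simp
lemma fr_snd0: "\<not> t < mA \<Longrightarrow> snd (fr n bz ba) t = (\<lambda>_. 0)" unfolding fracP_def by simp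

lemma fr_X: assumes n: "1 \<le> n" shows "fr n bz ba \<in> X"
proof (rule XI)
  fix t assume t: "t < mZ"
  show "fst (fr n bz ba) t \<in> Obar (PZ t)" using comp.embF_Obar[OF cZ[OF t] n] t n by (simp add: fr_fst)
next
  fix t assume t: "t < mA"
  show "snd (fr n bz ba) t \<in> Obar (PA t)" using comp.embF_Obar[OF cA[OF t] n] t n by (simp add: fr_snd)
qed (simp_all add: fr_fst0 fr_snd0)

lemma fr_cong: assumes "\<And>t. t < mZ \<Longrightarrow> bz t mod (PZ t ^ n - 1) = bz' t mod (PZ t ^ n - 1)"
  "\<And>t. t < mA \<Longrightarrow> ba t mod (PA t ^ n - 1) = ba' t mod (PA t ^ n - 1)"
  shows "fr n bz ba = fr n bz' ba'"
  unfolding fracP_def using assms by (simp add: prod_eq_iff fun_eq_iff)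

lemma pow_period: "((w::'a::unique_euclidean_ring) ^ (j + n) * a) mod (w ^ n - 1) = (w ^ j * a) mod (w ^ n - 1)"
proof -
  have "w ^ (j + n) * a - w ^ j * a = (w ^ n - 1) * (w ^ j * a)" by (simp add: algebra_simps power_add)
  then show ?thesis using mod_eq_dvd_iff by (metis dvd_triv_left)
qed

lemma fr_period: "fr n (\<lambda>t. PZ t ^ (j + n) * az t) (\<lambda>t. PA t ^ (j + n) * aa t) =
    fr n (\<lambda>t. PZ t ^ j * az t) (\<lambda>t. PA t ^ j * aa t)"
  by (rule fr_cong) (simp_all add: pow_period)

lemma psi_frac: assumes n: "1 \<le> n"
  shows "psiP (fr n (\<lambda>t. PZ t ^ Suc j * az t) (\<lambda>t. PA t ^ Suc j * aa t)) =
    fr n (\<lambda>t. PZ t ^ j * az t) (\<lambda>t. PA t ^ j * aa t)"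
proof (rule X_eqI[OF psiP_X[OF fr_X[OF n]] fr_X[OF n]])
  fix t assume t: "t < mZ"
  let ?w = "PZ t"
  have "psiO ?w (embF ?w n ((?w ^ Suc j * az t) mod (?w ^ n - 1))) = embF ?w n ((?w ^ j * az t) mod (?w ^ n - 1))"
    by (rule comp.psi_embF[OF cZ[OF t] n]) (simp_all add: mod_mult_right_eq mult.assoc)
  then show "fst (psiP (fr n (\<lambda>t. PZ t ^ Suc j * az t) (\<lambda>t. PA t ^ Suc j * aa t))) t =
         fst (fr n (\<lambda>t. PZ t ^ j * az t) (\<lambda>t. PA t ^ j * aa t)) t"
    using t n by (simp add: psiP_fst fr_fst)
next
  fix t assume t: "t < mA"
  let ?w = "PA t"
  have "psiO ?w (embF ?w n ((?w ^ Suc j * aa t) mod (?w ^ n - 1))) = embF ?w n ((?w ^ j * aa t) mod (?w ^ n - 1))"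
    by (rule comp.psi_embF[OF cA[OF t] n]) (simp_all add: mod_mult_right_eq mult.assoc)
  then show "snd (psiP (fr n (\<lambda>t. PZ t ^ Suc j * az t) (\<lambda>t. PA t ^ Suc j * aa t))) t =
         snd (fr n (\<lambda>t. PZ t ^ j * az t) (\<lambda>t. PA t ^ j * aa t)) t"
    using t n by (simp add: psiP_snd fr_snd)
qed

lemma fr_lowZ: "1 \<le> n \<Longrightarrow> N \<le> n \<Longrightarrow> t < mZ \<Longrightarrow> fst (fr n bz ba) t N = (- (bz t mod (PZ t ^ n - 1))) mod PZ t ^ N"
  using fr_fst comp.embF_low[OF cZ] by simp
lemma fr_lowA: "1 \<le> n \<Longrightarrow> N \<le> n \<Longrightarrow> t < mA \<Longrightarrow> snd (fr n bz ba) t N = (- (ba t mod (PA t ^ n - 1))) mod PA t ^ N"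
  using fr_snd comp.embF_low[OF cA] by simp

lemma fr_zero: "fr 1 (\<lambda>t. 0) (\<lambda>t. 0) = zeroP"
  unfolding fracP_def zeroP_def using comp.embO_eq[OF cZ, of _ 1] comp.embO_eq[OF cA, of _ 1]
  by (simp add: embF_def prod_eq_iff fun_eq_iff)


definition key :: "nat \<Rightarrow> 'f obar \<Rightarrow> (nat \<Rightarrow> int) \<times> (nat \<Rightarrow> 'f poly)" where
  "key N x = ((\<lambda>t. fst x t N), (\<lambda>t. snd x t N))"

lemma key_agr: "x \<in> X \<Longrightarrow> y \<in> X \<Longrightarrow> key N x = key N y \<longleftrightarrow> agr N x y"
proof
  assume "x \<in> X" "y \<in> X" "key N x = key N y"
  then show "agr N x y" unfolding key_def agr_def by (simp add: fun_eq_iff)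
next
  assume x: "x \<in> X" and y: "y \<in> X" and a: "agr N x y"
  have "(\<lambda>t. fst x t N) = (\<lambda>t. fst y t N)"
  proof
    fix t show "fst x t N = fst y t N" using a XZ0[OF x] XZ0[OF y] unfolding agr_def by (cases "t < mZ") auto
  qed
  moreover have "(\<lambda>t. snd x t N) = (\<lambda>t. snd y t N)"
  proof
    fix t show "snd x t N = snd y t N" using a XA0[OF x] XA0[OF y] unfolding agr_def by (cases "t < mA") auto
  qed
  ultimately show "key N x = key N y" unfolding key_def by simp
qed

lemma key_finite: "finite (key N ` X)"
proof -
  let ?SZ = "{f :: nat \<Rightarrow> int. (\<forall>t<mZ. f t \<in> {a. a mod PZ t ^ N = a}) \<and> (\<forall>t. mZ \<le> t \<longrightarrow> f t = 0)}"
  let ?SA = "{f :: nat \<Rightarrow> 'f poly. (\<forall>t<mA. f t \<in> {a. a mod PA t ^ N = a}) \<and> (\<forall>t. mA \<le> t \<longrightarrow> f t = 0)}"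
  have f1: "finite ?SZ" by (rule finite_funs) (use comp.fin[OF cZ] in simp)
  have f2: "finite ?SA" by (rule finite_funs) (use comp.fin[OF cA] in simp)
  have sub: "key N ` X \<subseteq> ?SZ \<times> ?SA"
  proof
    fix k assume "k \<in> key N ` X"
    then obtain x where x: "x \<in> X" and k: "k = key N x" by blast
    have a: "\<forall>t<mZ. fst x t N mod PZ t ^ N = fst x t N"
    proof (intro allI impI)
      fix t assume t: "t < mZ" show "fst x t N mod PZ t ^ N = fst x t N" by (rule comp.Obar_mod[OF cZ[OF t] XZ[OF x t]])
    qed
    have b: "\<forall>t. mZ \<le> t \<longrightarrow> fst x t N = 0" using XZ0[OF x] by simp
    have c: "\<forall>t<mA. snd x t N mod PA t ^ N = snd x t N"
    proof (intro allI impI)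
      fix t assume t: "t < mA" show "snd x t N mod PA t ^ N = snd x t N" by (rule comp.Obar_mod[OF cA[OF t] XA[OF x t]])
    qed
    have d: "\<forall>t. mA \<le> t \<longrightarrow> snd x t N = 0" using XA0[OF x] by simp
    have "(\<lambda>t. fst x t N) \<in> ?SZ" using a b by blast
    moreover have "(\<lambda>t. snd x t N) \<in> ?SA" using c d by blast
    ultimately show "k \<in> ?SZ \<times> ?SA" unfolding k key_def by blast
  qed
  show ?thesis by (rule finite_subset[OF sub finite_cartesian_product[OF f1 f2]])
qed

lemma fan:
  assumes inv: "\<And>x y N. x \<in> X \<Longrightarrow> y \<in> X \<Longrightarrow> agr N x y \<Longrightarrow> P x N \<Longrightarrow> P y N"
    and mono: "\<And>x N. x \<in> X \<Longrightarrow> P x N \<Longrightarrow> P x (Suc N)"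
    and ex: "\<And>x. x \<in> X \<Longrightarrow> \<exists>N. P x N"
  shows "\<exists>N. \<forall>x\<in>X. P x N"
proof (rule ccontr)
  assume nu: "\<not> (\<exists>N. \<forall>x\<in>X. P x N)"
  have mono': "P x M" if "x \<in> X" "P x N" "N \<le> M" for x N M
    using that(3,2)
  proof (induction M rule: dec_induct)
    case base then show ?case .
  next
    case (step m) then show ?case using mono[OF that(1)] by blast
  qed
  define IB where "IB x N \<longleftrightarrow> (\<forall>M\<ge>N. \<exists>y\<in>X. agr N y x \<and> \<not> P y M)" for x N
  have step: "\<exists>x'\<in>X. agr N x' x \<and> IB x' (Suc N)" if x: "x \<in> X" and ib: "IB x N" for x N
  proof (rule ccontr)
    assume nc: "\<not> (\<exists>x'\<in>X. agr N x' x \<and> IB x' (Suc N))"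
    define S where "S = {x' \<in> X. agr N x' x}"
    define Keys where "Keys = key (Suc N) ` S"
    have fK: "finite Keys" unfolding Keys_def S_def
      by (rule finite_subset[OF _ key_finite[of "Suc N"]]) auto
    define f where "f k = (SOME M. \<forall>y\<in>X. key (Suc N) y = k \<longrightarrow> P y M)" for k
    have fP: "\<forall>y\<in>X. key (Suc N) y = k \<longrightarrow> P y (f k)" if k: "k \<in> Keys" for k
    proof -
      obtain x' where x': "x' \<in> X" "agr N x' x" and kx: "k = key (Suc N) x'"
        using k unfolding Keys_def S_def by blast
      then have "\<not> IB x' (Suc N)" using nc by blast
      then obtain M where M: "\<forall>y\<in>X. agr (Suc N) y x' \<longrightarrow> P y M" unfolding IB_def by blast
      then have "\<forall>y\<in>X. key (Suc N) y = k \<longrightarrow> P y M" using key_agr x'(1) kx by blast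
      then show ?thesis unfolding f_def by (rule someI)
    qed
    define Ms where "Ms = Max (insert N (f ` Keys))"
    have "N \<le> Ms" unfolding Ms_def using fK by simp
    then obtain y where y: "y \<in> X" "agr N y x" "\<not> P y Ms" using ib unfolding IB_def by blast
    have kk: "key (Suc N) y \<in> Keys" unfolding Keys_def S_def using y by blast
    have "P y (f (key (Suc N) y))" using fP[OF kk] y by blast
    moreover have "f (key (Suc N) y) \<le> Ms" unfolding Ms_def using fK kk by simp
    ultimately have "P y Ms" using mono' y(1) by blast
    then show False using y by blast
  qed
  define nxt where "nxt N x = (SOME x'. x' \<in> X \<and> agr N x' x \<and> IB x' (Suc N))" for N x
  define s where "s = rec_nat zeroP nxt"
  have s0: "s 0 = zeroP" unfolding s_def by simp
  have sS: "s (Suc N) = nxt N (s N)" for N unfolding s_def by simp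
  have inv_s: "s N \<in> X \<and> IB (s N) N" for N
  proof (induction N)
    case 0
    have "IB zeroP 0" unfolding IB_def using nu agr_0 zeroP_X by blast
    then show ?case using s0 zeroP_X by simp
  next
    case (Suc N)
    then have "\<exists>x'. x' \<in> X \<and> agr N x' (s N) \<and> IB x' (Suc N)" using step by blast
    then show ?case unfolding sS nxt_def by (rule someI2_ex) blast
  qed
  have agr_s: "agr N (s (Suc N)) (s N)" for N
  proof -
    have "\<exists>x'. x' \<in> X \<and> agr N x' (s N) \<and> IB x' (Suc N)" using step inv_s by blast
    then show ?thesis unfolding sS nxt_def by (rule someI2_ex) blast
  qed
  define z where "z = ((\<lambda>t k. fst (s k) t k), (\<lambda>t k. snd (s k) t k))"
  have zX: "z \<in> X"
  proof (rule XI)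
    fix t assume t: "t < mZ"
    show "fst z t \<in> Obar (PZ t)" unfolding Obar_def
    proof (intro CollectI allI)
      fix k
      have "fst (s (Suc k)) t k = fst (s (Suc k)) t (Suc k) mod PZ t ^ k"
        using comp.Obar_le[OF cZ[OF t] XZ[OF conjunct1[OF inv_s] t], of k "Suc k"] by simp
      moreover have "fst (s (Suc k)) t k = fst (s k) t k" using agr_s[of k] t unfolding agr_def by blast
      ultimately show "fst z t k = fst z t (Suc k) mod PZ t ^ k" unfolding z_def by simp
    qed
  next
    fix t assume t: "t < mA"
    show "snd z t \<in> Obar (PA t)" unfolding Obar_def
    proof (intro CollectI allI)
      fix k
      have "snd (s (Suc k)) t k = snd (s (Suc k)) t (Suc k) mod PA t ^ k"
        using comp.Obar_le[OF cA[OF t] XA[OF conjunct1[OF inv_s] t], of k "Suc k"] by simp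
      moreover have "snd (s (Suc k)) t k = snd (s k) t k" using agr_s[of k] t unfolding agr_def by blast
      ultimately show "snd z t k = snd z t (Suc k) mod PA t ^ k" unfolding z_def by simp
    qed
  next
    fix t assume t: "\<not> t < mZ"
    show "fst z t = (\<lambda>_. 0)" unfolding z_def using XZ0[OF conjunct1[OF inv_s] t] by simp
  next
    fix t assume t: "\<not> t < mA"
    show "snd z t = (\<lambda>_. 0)" unfolding z_def using XA0[OF conjunct1[OF inv_s] t] by simp
  qed
  have agr_z: "agr N z (s N)" for N unfolding z_def agr_def by simp
  obtain N0 where N0: "P z N0" using ex[OF zX] by blast
  obtain y where y: "y \<in> X" "agr N0 y (s N0)" "\<not> P y N0" using inv_s[of N0] unfolding IB_def by blast
  have "agr N0 z y" using agr_z[of N0] y(2) agr_sym agr_trans by blast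
  then have "P y N0" using inv[OF zX y(1) _ N0] by blast
  then show False using y by blast
qed

end

locale main = vf absv + prodsp mZ mA PZ PA
  for absv :: "'k::field \<Rightarrow> real" and mZ mA :: nat and PZ :: "nat \<Rightarrow> int" and PA :: "nat \<Rightarrow> 'f::{field,finite} poly"
begin

abbreviation "cont \<equiv> contP mZ mA PZ PA absv"
abbreviation "nv \<equiv> nonvanishingP mZ mA PZ PA"

lemma cont_iff: "cont F \<longleftrightarrow> (\<forall>x\<in>X. \<forall>e>0. \<exists>N. \<forall>y\<in>X. agr N y x \<longrightarrow> absv (F y - F x) < e)"
  unfolding contP_def agr_def by simp

lemma nvD: "nv F \<Longrightarrow> x \<in> X \<Longrightarrow> F x \<noteq> 0" unfolding nonvanishingP_def by blast

lemma cont_ratio: assumes nvF: "nv F"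
  shows "cont F \<longleftrightarrow> (\<forall>x\<in>X. \<forall>e>0. \<exists>N. \<forall>y\<in>X. agr N y x \<longrightarrow> near1 e (F y / F x))"
proof
  assume c: "cont F"
  show "\<forall>x\<in>X. \<forall>e>0. \<exists>N. \<forall>y\<in>X. agr N y x \<longrightarrow> near1 e (F y / F x)"
  proof (intro ballI allI impI)
    fix x e assume x: "x \<in> X" and e: "(0::real) < e"
    have "0 < e * absv (F x)" using e av_pos[OF nvD[OF nvF x]] by simp
    then obtain N where N: "\<forall>y\<in>X. agr N y x \<longrightarrow> absv (F y - F x) < e * absv (F x)"
      using c x unfolding cont_iff by blast
    then show "\<exists>N. \<forall>y\<in>X. agr N y x \<longrightarrow> near1 e (F y / F x)"
      using near1_iff[OF nvD[OF nvF x]] by blast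
  qed
next
  assume r: "\<forall>x\<in>X. \<forall>e>0. \<exists>N. \<forall>y\<in>X. agr N y x \<longrightarrow> near1 e (F y / F x)"
  show "cont F" unfolding cont_iff
  proof (intro ballI allI impI)
    fix x e assume x: "x \<in> X" and e: "(0::real) < e"
    have ax: "0 < absv (F x)" using av_pos[OF nvD[OF nvF x]] .
    then have "0 < e / absv (F x)" using e by simp
    then obtain N where N: "\<forall>y\<in>X. agr N y x \<longrightarrow> near1 (e / absv (F x)) (F y / F x)" using r x by blast
    have "\<forall>y\<in>X. agr N y x \<longrightarrow> absv (F y - F x) < e"
    proof (intro ballI impI)
      fix y assume "y \<in> X" "agr N y x"
      then have "absv (F y - F x) < e / absv (F x) * absv (F x)"
        using N near1_iff[OF nvD[OF nvF x]] by blast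
      then show "absv (F y - F x) < e" using ax by simp
    qed
    then show "\<exists>N. \<forall>y\<in>X. agr N y x \<longrightarrow> absv (F y - F x) < e" by blast
  qed
qed

lemma nv_mult: "nv F \<Longrightarrow> nv G \<Longrightarrow> nv (\<lambda>x. F x * G x)"
  unfolding nonvanishingP_def by simp
lemma nv_inv: "nv F \<Longrightarrow> nv (\<lambda>x. inverse (F x))"
  unfolding nonvanishingP_def by simp
lemma nv_psi: "nv F \<Longrightarrow> nv (\<lambda>x. F (psiP x))"
  unfolding nonvanishingP_def using psiP_X by simp

lemma cont_mult: assumes "nv F" "nv G" "cont F" "cont G" shows "cont (\<lambda>x. F x * G x)"
  unfolding cont_ratio[OF nv_mult[OF assms(1,2)]]
proof (intro ballI allI impI)
  fix x e assume x: "x \<in> X" and e: "(0::real) < e"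
  define e' where "e' = min e 1"
  have e': "0 < e'" "e' \<le> 1" "e' \<le> e" unfolding e'_def using e by auto
  obtain N1 where N1: "\<forall>y\<in>X. agr N1 y x \<longrightarrow> near1 e' (F y / F x)"
    using assms(3) x e' unfolding cont_ratio[OF assms(1)] by blast
  obtain N2 where N2: "\<forall>y\<in>X. agr N2 y x \<longrightarrow> near1 e' (G y / G x)"
    using assms(4) x e' unfolding cont_ratio[OF assms(2)] by blast
  have "\<forall>y\<in>X. agr (max N1 N2) y x \<longrightarrow> near1 e (F y * G y / (F x * G x))"
  proof (intro ballI impI)
    fix y assume y: "y \<in> X" and a: "agr (max N1 N2) y x"
    have "near1 e' (F y / F x)" using N1 agr_mono[OF y x a] y by simp
    moreover have "near1 e' (G y / G x)" using N2 agr_mono[OF y x a] y by simp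
    ultimately have "near1 e' ((F y / F x) * (G y / G x))" using near1_mult e' by blast
    then show "near1 e (F y * G y / (F x * G x))" using near1_mono e' by simp
  qed
  then show "\<exists>N. \<forall>y\<in>X. agr N y x \<longrightarrow> near1 e (F y * G y / (F x * G x))" by blast
qed

lemma cont_inv: assumes "nv F" "cont F" shows "cont (\<lambda>x. inverse (F x))"
  unfolding cont_ratio[OF nv_inv[OF assms(1)]]
proof (intro ballI allI impI)
  fix x e assume x: "x \<in> X" and e: "(0::real) < e"
  define e' where "e' = min e 1"
  have e': "0 < e'" "e' \<le> 1" "e' \<le> e" unfolding e'_def using e by auto
  obtain N1 where N1: "\<forall>y\<in>X. agr N1 y x \<longrightarrow> near1 e' (F y / F x)"
    using assms(2) x e' unfolding cont_ratio[OF assms(1)] by blast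
  have "\<forall>y\<in>X. agr N1 y x \<longrightarrow> near1 e (inverse (F y) / inverse (F x))"
  proof (intro ballI impI)
    fix y assume y: "y \<in> X" and a: "agr N1 y x"
    have "near1 e' (F y / F x)" using N1 a y by blast
    then have "near1 e' (inverse (F y / F x))" using near1_inverse e' by blast
    then show "near1 e (inverse (F y) / inverse (F x))" using near1_mono e' by (simp add: divide_inverse mult.commute)
  qed
  then show "\<exists>N. \<forall>y\<in>X. agr N y x \<longrightarrow> near1 e (inverse (F y) / inverse (F x))" by blast
qed

lemma cont_psi: assumes "nv F" "cont F" shows "cont (\<lambda>x. F (psiP x))"
  unfolding cont_ratio[OF nv_psi[OF assms(1)]]
proof (intro ballI allI impI)
  fix x e assume x: "x \<in> X" and e: "(0::real) < e"
  obtain N where N: "\<forall>y\<in>X. agr N y (psiP x) \<longrightarrow> near1 e (F y / F (psiP x))"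
    using assms(2) psiP_X[OF x] e unfolding cont_ratio[OF assms(1)] by blast
  have "\<forall>y\<in>X. agr (Suc N) y x \<longrightarrow> near1 e (F (psiP y) / F (psiP x))"
    using N psiP_agr psiP_X x by blast
  then show "\<exists>N. \<forall>y\<in>X. agr N y x \<longrightarrow> near1 e (F (psiP y) / F (psiP x))" by blast
qed

lemma cont_cong: assumes "\<And>x. x \<in> X \<Longrightarrow> F x = F' x" shows "cont F \<longleftrightarrow> cont F'"
  unfolding cont_iff using assms by (metis (no_types, lifting))

lemma nv_cong: assumes "\<And>x. x \<in> X \<Longrightarrow> F x = F' x" shows "nv F \<longleftrightarrow> nv F'"
  unfolding nonvanishingP_def using assms by auto

lemma unif: assumes nvF: "nv F" and c: "cont F" and e: "0 < e"
  shows "\<exists>N. \<forall>x\<in>X. \<forall>y\<in>X. agr N x y \<longrightarrow> near1 e (F x / F y)"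
proof -
  define e' where "e' = min e 1"
  have e': "0 < e'" "e' \<le> 1" "e' \<le> e" unfolding e'_def using e by auto
  define P where "P x N \<longleftrightarrow> (\<forall>y\<in>X. \<forall>z\<in>X. agr N y x \<longrightarrow> agr N z x \<longrightarrow> near1 e' (F y / F z))" for x N
  have "\<exists>N. \<forall>x\<in>X. P x N"
  proof (rule fan)
    fix x y N assume "x \<in> X" "y \<in> X" "agr N x y" "P x N"
    then show "P y N" unfolding P_def using agr_sym agr_trans by blast
  next
    fix x N assume x: "x \<in> X" "P x N"
    then show "P x (Suc N)" unfolding P_def using agr_mono[OF _ x(1), of _ "Suc N" N] by auto
  next
    fix x assume x: "x \<in> X"
    obtain N where N: "\<forall>y\<in>X. agr N y x \<longrightarrow> near1 e' (F y / F x)"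
      using c x e' unfolding cont_ratio[OF nvF] by blast
    have "P x N" unfolding P_def
    proof (intro ballI impI)
      fix y z assume "y \<in> X" "z \<in> X" "agr N y x" "agr N z x"
      then have "near1 e' ((F y / F x) / (F z / F x))" using N near1_div e' by blast
      then show "near1 e' (F y / F z)" using nvD[OF nvF x] by simp
    qed
    then show "\<exists>N. P x N" by blast
  qed
  then obtain N where N: "\<forall>x\<in>X. P x N" by blast
  have "\<forall>x\<in>X. \<forall>y\<in>X. agr N x y \<longrightarrow> near1 e (F x / F y)"
  proof (intro ballI impI)
    fix x y assume "x \<in> X" "y \<in> X" "agr N x y"
    then have "near1 e' (F x / F y)" using N agr_refl unfolding P_def by blast
    then show "near1 e (F x / F y)" using near1_mono e' by blast
  qed
  then show ?thesis by blast
qed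

end

lemma int_red_bound: assumes "(a::int) mod (w^n - 1) = a" "w \<ge> 2" "1 \<le> n" shows "0 \<le> a \<and> a < w^n - 1"
proof -
  have "w^1 \<le> w^n" using assms(2,3) by (intro power_increasing) auto
  then have "w^n - 1 > 0" using assms(2) by simp
  then show ?thesis using assms(1) by (metis pos_mod_bound pos_mod_sign)
qed

lemma poly_red_bound: assumes "(a::'f::field poly) mod (w^n - 1) = a" "degree w \<ge> 1" "1 \<le> n"
  shows "degree a < degree (w^n - 1)"
proof -
  have dD: "degree (w^n - 1) = n * degree w" using degree_pow_minus1[OF assms(2,3)] .
  then have "degree (w^n - 1) \<ge> 1" using assms by simp
  then have D0: "w^n - 1 \<noteq> 0" by auto
  show ?thesis
  proof (cases "a = 0")
    case True then show ?thesis using \<open>degree (w^n - 1) \<ge> 1\<close> by simp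
  next
    case False then show ?thesis using poly_small[OF assms(1) D0] by simp
  qed
qed

lemma prod_shift1: fixes h :: "nat \<Rightarrow> 'a::comm_monoid_mult" assumes "h n = h 0"
  shows "(\<Prod>j<n. h (Suc j)) = (\<Prod>j<n. h j)"
proof (cases n)
  case 0 then show ?thesis by simp
next
  case (Suc m)
  have "(\<Prod>j<n. h (Suc j)) = (\<Prod>j<m. h (Suc j)) * h (Suc m)" unfolding Suc by simp
  moreover have "(\<Prod>j<n. h j) = h 0 * (\<Prod>j<m. h (Suc j))" unfolding Suc prod.lessThan_Suc_shift by simp
  ultimately show ?thesis using assms Suc by (simp add: mult.commute)
qed

lemma prod_shift: fixes g :: "nat \<Rightarrow> 'a::comm_monoid_mult" assumes "\<And>i. g (i + n) = g i"
  shows "(\<Prod>j<n. g (j + s)) = (\<Prod>j<n. g j)"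
proof (induction s)
  case 0 then show ?case by simp
next
  case (Suc s)
  have "(\<Prod>j<n. g (j + Suc s)) = (\<Prod>j<n. (\<lambda>j. g (j + s)) (Suc j))" by simp
  also have "\<dots> = (\<Prod>j<n. g (j + s))" by (rule prod_shift1) (use assms[of s] in \<open>simp add: add.commute\<close>)
  finally show ?case using Suc by simp
qed

lemma prod_split: fixes g :: "nat \<Rightarrow> 'a::comm_monoid_mult"
  shows "(\<Prod>i<a + b. g i) = (\<Prod>i<a. g i) * (\<Prod>j<b. g (a + j))"
  by (induction b) (simp_all add: mult.assoc)

context main
begin

definition "mZv x Lv t = mmF (PZ t) (fst x t) Lv"
definition "mAv x Lv t = mmF (PA t) (snd x t) Lv"
definition "eZv x Lv t = eeF (PZ t) (fst x t) Lv"
definition "eAv x Lv t = eeF (PA t) (snd x t) Lv"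
definition "f1 x K Lv i = fr (K + Lv + 1) (\<lambda>t. PZ t ^ i * mZv x Lv t) (\<lambda>t. PA t ^ i * mAv x Lv t)"
definition "f2 x K Lv i = fr (K + Lv) (\<lambda>t. PZ t ^ i * eZv x Lv t) (\<lambda>t. PA t ^ i * eAv x Lv t)"

lemma c1: assumes x: "x \<in> X" and K: "1 \<le> K" "i \<le> K" and N: "N \<le> Suc Lv"
  shows "agr N (smulP i x) (f1 x K Lv i)"
  unfolding agr_def
proof (intro conjI allI impI)
  fix t assume t: "t < mZ"
  have n: "1 \<le> K + Lv + 1" by simp
  show "fst (smulP i x) t N = fst (f1 x K Lv i) t N"
    unfolding f1_def smulP_fst fr_fst[OF n t] mZv_def
    using comp.G1[OF cZ[OF t] XZ[OF x t] N] comp.G2[OF cZ[OF t] XZ[OF x t] K] N t by simp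
next
  fix t assume t: "t < mA"
  have n: "1 \<le> K + Lv + 1" by simp
  show "snd (smulP i x) t N = snd (f1 x K Lv i) t N"
    unfolding f1_def smulP_snd fr_snd[OF n t] mAv_def
    using comp.G1[OF cA[OF t] XA[OF x t] N] comp.G2[OF cA[OF t] XA[OF x t] K] N t by simp
qed

lemma c2: assumes x: "x \<in> X" and K: "1 \<le> K" "i \<le> K" and N: "N \<le> Lv"
  shows "agr N (smulP i (psiP x)) (f2 x K Lv i)"
  unfolding agr_def
proof (intro conjI allI impI)
  fix t assume t: "t < mZ"
  have n: "1 \<le> K + Lv" using K by simp
  show "fst (smulP i (psiP x)) t N = fst (f2 x K Lv i) t N"
    unfolding f2_def smulP_fst psiP_fst fr_fst[OF n t] eZv_def
    using comp.G3[OF cZ[OF t] XZ[OF x t] N] comp.G4[OF cZ[OF t] XZ[OF x t] K] N t by simp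
next
  fix t assume t: "t < mA"
  have n: "1 \<le> K + Lv" using K by simp
  show "snd (smulP i (psiP x)) t N = snd (f2 x K Lv i) t N"
    unfolding f2_def smulP_snd psiP_snd fr_snd[OF n t] eAv_def
    using comp.G3[OF cA[OF t] XA[OF x t] N] comp.G4[OF cA[OF t] XA[OF x t] K] N t by simp
qed

lemma c3: assumes x: "x \<in> X" and K: "1 \<le> K" and j: "1 \<le> j" "j \<le> Lv" and N: "N \<le> K"
  shows "agr N (f1 x K Lv (K + j)) (f2 x K Lv (K + j))"
  unfolding agr_def
proof (intro conjI allI impI)
  fix t assume t: "t < mZ"
  have n1: "1 \<le> K + Lv + 1" by simp
  have n2: "1 \<le> K + Lv" using K by simp
  show "fst (f1 x K Lv (K + j)) t N = fst (f2 x K Lv (K + j)) t N"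
    unfolding f1_def f2_def fr_fst[OF n1 t] fr_fst[OF n2 t] mZv_def eZv_def
    using comp.G5a[OF cZ[OF t] XZ[OF x t] K j N] comp.G5b[OF cZ[OF t] XZ[OF x t] K j N] by simp
next
  fix t assume t: "t < mA"
  have n1: "1 \<le> K + Lv + 1" by simp
  have n2: "1 \<le> K + Lv" using K by simp
  show "snd (f1 x K Lv (K + j)) t N = snd (f2 x K Lv (K + j)) t N"
    unfolding f1_def f2_def fr_snd[OF n1 t] fr_snd[OF n2 t] mAv_def eAv_def
    using comp.G5a[OF cA[OF t] XA[OF x t] K j N] comp.G5b[OF cA[OF t] XA[OF x t] K j N] by simp
qed


definition "perR R \<longleftrightarrow> (\<forall>n\<ge>1. \<forall>az aa. (\<forall>t<mZ. 0 \<le> az t \<and> az t < PZ t ^ n - 1) \<and>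
   (\<forall>t<mA. degree (aa t) < degree (PA t ^ n - 1)) \<longrightarrow>
   (\<Prod>j<n. R (fr n (\<lambda>t. PZ t ^ j * az t) (\<lambda>t. PA t ^ j * aa t))) = 1)"

lemma perI: assumes "perR R" "1 \<le> n" "\<forall>t<mZ. 0 \<le> az t \<and> az t < PZ t ^ n - 1"
   "\<forall>t<mA. degree (aa t) < degree (PA t ^ n - 1)"
  shows "(\<Prod>j<n. R (fr n (\<lambda>t. PZ t ^ j * az t) (\<lambda>t. PA t ^ j * aa t))) = 1"
  using assms unfolding perR_def by blast

lemma f1_period: "f1 x K Lv (i + (K + Lv + 1)) = f1 x K Lv i"
  unfolding f1_def by (rule fr_period)
lemma f2_period: "f2 x K Lv (i + (K + Lv)) = f2 x K Lv i"
  unfolding f2_def by (rule fr_period)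

lemma orbit1: assumes x: "x \<in> X" and K: "1 \<le> K" and per: "perR R"
  shows "(\<Prod>i<Suc K. R (f1 x K Lv i)) * (\<Prod>j<Lv. R (f1 x K Lv (Suc K + j))) = 1"
proof -
  let ?n = "K + Lv + 1"
  let ?az = "\<lambda>t. PZ t ^ K * mZv x Lv t"
  let ?aa = "\<lambda>t. PA t ^ K * mAv x Lv t"
  have bz: "\<forall>t<mZ. 0 \<le> ?az t \<and> ?az t < PZ t ^ ?n - 1"
  proof (intro allI impI)
    fix t assume t: "t < mZ"
    have "?az t mod (PZ t ^ ?n - 1) = ?az t" unfolding mZv_def
      by (rule comp.red_small[OF cZ[OF t] comp.mm_small[OF cZ[OF t] XZ[OF x t], of Lv]]) (insert K, simp_all)
    then show "0 \<le> ?az t \<and> ?az t < PZ t ^ ?n - 1" by (rule int_red_bound[OF _ PZ2[OF t]]) simp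
  qed
  have ba: "\<forall>t<mA. degree (?aa t) < degree (PA t ^ ?n - 1)"
  proof (intro allI impI)
    fix t assume t: "t < mA"
    have "?aa t mod (PA t ^ ?n - 1) = ?aa t" unfolding mAv_def
      by (rule comp.red_small[OF cA[OF t] comp.mm_small[OF cA[OF t] XA[OF x t], of Lv]]) (insert K, simp_all)
    then show "degree (?aa t) < degree (PA t ^ ?n - 1)" by (rule poly_red_bound[OF _ PAd[OF t]]) simp
  qed
  have "(\<Prod>j<?n. R (fr ?n (\<lambda>t. PZ t ^ j * ?az t) (\<lambda>t. PA t ^ j * ?aa t))) = 1"
    by (rule perI[OF per _ bz ba]) simp
  moreover have "fr ?n (\<lambda>t. PZ t ^ j * ?az t) (\<lambda>t. PA t ^ j * ?aa t) = f1 x K Lv (j + K)" for j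
    unfolding f1_def by (simp add: power_add mult.assoc)
  ultimately have "(\<Prod>j<?n. R (f1 x K Lv (j + K))) = 1" by simp
  moreover have "(\<Prod>j<?n. R (f1 x K Lv (j + K))) = (\<Prod>j<?n. R (f1 x K Lv j))"
    by (rule prod_shift) (metis f1_period)
  ultimately have "(\<Prod>j<Suc K + Lv. R (f1 x K Lv j)) = 1" by simp
  then show ?thesis unfolding prod_split .
qed

lemma orbit2: assumes x: "x \<in> X" and K: "1 \<le> K" and per: "perR R"
  shows "(\<Prod>i<K. R (f2 x K Lv (Suc i))) * (\<Prod>j<Lv. R (f2 x K Lv (Suc K + j))) = 1"
proof -
  let ?n = "K + Lv"
  let ?az = "\<lambda>t. PZ t ^ K * eZv x Lv t"
  let ?aa = "\<lambda>t. PA t ^ K * eAv x Lv t"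
  have n: "1 \<le> ?n" using K by simp
  have bz: "\<forall>t<mZ. 0 \<le> ?az t \<and> ?az t < PZ t ^ ?n - 1"
  proof (intro allI impI)
    fix t assume t: "t < mZ"
    have "?az t mod (PZ t ^ ?n - 1) = ?az t" unfolding eZv_def
      by (rule comp.red_small[OF cZ[OF t] comp.ee_small[OF cZ[OF t] XZ[OF x t], of Lv]]) (insert K, simp_all)
    then show "0 \<le> ?az t \<and> ?az t < PZ t ^ ?n - 1" by (rule int_red_bound[OF _ PZ2[OF t] n])
  qed
  have ba: "\<forall>t<mA. degree (?aa t) < degree (PA t ^ ?n - 1)"
  proof (intro allI impI)
    fix t assume t: "t < mA"
    have "?aa t mod (PA t ^ ?n - 1) = ?aa t" unfolding eAv_def
      by (rule comp.red_small[OF cA[OF t] comp.ee_small[OF cA[OF t] XA[OF x t], of Lv]]) (insert K, simp_all)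
    then show "degree (?aa t) < degree (PA t ^ ?n - 1)" by (rule poly_red_bound[OF _ PAd[OF t] n])
  qed
  have "(\<Prod>j<?n. R (fr ?n (\<lambda>t. PZ t ^ j * ?az t) (\<lambda>t. PA t ^ j * ?aa t))) = 1"
    by (rule perI[OF per n bz ba])
  moreover have "fr ?n (\<lambda>t. PZ t ^ j * ?az t) (\<lambda>t. PA t ^ j * ?aa t) = f2 x K Lv (j + K)" for j
    unfolding f2_def by (simp add: power_add mult.assoc)
  ultimately have "(\<Prod>j<?n. R (f2 x K Lv (j + K))) = 1" by simp
  moreover have "(\<Prod>j<?n. R (f2 x K Lv (j + K))) = (\<Prod>j<?n. R (f2 x K Lv j))"
    by (rule prod_shift) (metis f2_period)
  moreover have "(\<Prod>j<?n. R (f2 x K Lv (j + 1))) = (\<Prod>j<?n. R (f2 x K Lv j))"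
    by (rule prod_shift) (metis f2_period)
  ultimately have "(\<Prod>j<K + Lv. R (f2 x K Lv (Suc j))) = 1" by simp
  then show ?thesis unfolding prod_split by simp
qed

lemma core:
  assumes x: "x \<in> X" and K: "1 \<le> K" and Lv: "1 \<le> Lv" and NK: "N \<le> K" and NL: "N \<le> Lv"
    and e: "0 < e" "e \<le> 1" and nvR: "nv R" and per: "perR R"
    and uc: "\<forall>x\<in>X. \<forall>y\<in>X. agr N x y \<longrightarrow> near1 e (R x / R y)"
  shows "near1 e ((\<Prod>i<Suc K. R (smulP i x)) / (\<Prod>i<K. R (smulP (Suc i) (psiP x))))"
proof -
  define A where "A = (\<Prod>i<Suc K. R (f1 x K Lv i))"
  define B where "B = (\<Prod>j<Lv. R (f1 x K Lv (Suc K + j)))"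
  define C where "C = (\<Prod>i<K. R (f2 x K Lv (Suc i)))"
  define D where "D = (\<Prod>j<Lv. R (f2 x K Lv (Suc K + j)))"
  define P1 where "P1 = (\<Prod>i<Suc K. R (smulP i x))"
  define P2 where "P2 = (\<Prod>i<K. R (smulP (Suc i) (psiP x)))"
  have AB: "A * B = 1" unfolding A_def B_def using orbit1[OF x K per] .
  have CD: "C * D = 1" unfolding C_def D_def using orbit2[OF x K per] .
  have n1: "1 \<le> K + Lv + 1" by simp
  have n2: "1 \<le> K + Lv" using K by simp
  have f1X: "f1 x K Lv i \<in> X" for i unfolding f1_def by (rule fr_X[OF n1])
  have f2X: "f2 x K Lv i \<in> X" for i unfolding f2_def by (rule fr_X[OF n2])
  have q1: "near1 e (P1 / A)"
  proof -
    have "P1 / A = (\<Prod>i<Suc K. R (smulP i x) / R (f1 x K Lv i))" unfolding P1_def A_def by (simp add: prod_dividef)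
    also have "near1 e \<dots>"
    proof (rule near1_prod[OF e])
      fix i assume "i \<in> {..<Suc K}"
      then have "agr N (smulP i x) (f1 x K Lv i)" using c1[OF x K, of i N] NL by simp
      then show "near1 e (R (smulP i x) / R (f1 x K Lv i))" using uc smulP_X[OF x] f1X by blast
    qed
    finally show ?thesis .
  qed
  have q2: "near1 e (C / P2)"
  proof -
    have "C / P2 = (\<Prod>i<K. R (f2 x K Lv (Suc i)) / R (smulP (Suc i) (psiP x)))" unfolding P2_def C_def by (simp add: prod_dividef)
    also have "near1 e \<dots>"
    proof (rule near1_prod[OF e])
      fix i assume "i \<in> {..<K}"
      then have "agr N (smulP (Suc i) (psiP x)) (f2 x K Lv (Suc i))" using c2[OF x K, of "Suc i" N] NL by simp
      then show "near1 e (R (f2 x K Lv (Suc i)) / R (smulP (Suc i) (psiP x)))"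
        using uc smulP_X[OF psiP_X[OF x]] f2X agr_sym by blast
    qed
    finally show ?thesis .
  qed
  have q3: "near1 e (D / B)"
  proof -
    have "D / B = (\<Prod>j<Lv. R (f2 x K Lv (Suc K + j)) / R (f1 x K Lv (Suc K + j)))" unfolding D_def B_def by (simp add: prod_dividef)
    also have "near1 e \<dots>"
    proof (rule near1_prod[OF e])
      fix j assume "j \<in> {..<Lv}"
      then have "agr N (f1 x K Lv (K + Suc j)) (f2 x K Lv (K + Suc j))" using c3[OF x K, of "Suc j" Lv N] NK by simp
      then show "near1 e (R (f2 x K Lv (Suc K + j)) / R (f1 x K Lv (Suc K + j)))"
        using uc f1X f2X agr_sym by simp
    qed
    finally show ?thesis .
  qed
  have B0: "B \<noteq> 0" using AB by auto
  have D0: "D \<noteq> 0" using CD by auto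
  have A0: "A \<noteq> 0" using AB by auto
  have "P1 / P2 = (P1 / A) * (C / P2) * (D / B)"
  proof -
    have "(P1 / A) * (C / P2) * (D / B) = (P1 * (C * D)) / (P2 * (A * B))"
      by (simp add: times_divide_times_eq ac_simps)
    then show ?thesis using AB CD by simp
  qed
  moreover have "near1 e ((P1 / A) * (C / P2) * (D / B))" using q1 q2 q3 near1_mult e by blast
  ultimately show ?thesis unfolding P1_def P2_def by simp
qed

end

context main
begin

definition "TT R K x = (\<Prod>i<K. R (smulP (Suc i) x))"

lemma R_zero: assumes "perR R" shows "R zeroP = 1"
proof -
  have bz: "\<forall>t<mZ. 0 \<le> (0::int) \<and> (0::int) < PZ t ^ 1 - 1"
  proof (intro allI impI)
    fix t assume "t < mZ" then show "0 \<le> (0::int) \<and> (0::int) < PZ t ^ 1 - 1" using PZ2 by fastforce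
  qed
  have ba: "\<forall>t<mA. degree (0::'f poly) < degree (PA t ^ 1 - 1)"
  proof (intro allI impI)
    fix t assume t: "t < mA"
    have "degree (PA t ^ 1 - 1) = 1 * degree (PA t)" by (rule degree_pow_minus1[OF PAd[OF t]]) simp
    then show "degree (0::'f poly) < degree (PA t ^ 1 - 1)" using PAd[OF t] by simp
  qed
  have "(\<Prod>j<1. R (fr 1 (\<lambda>t. PZ t ^ j * (\<lambda>t. 0) t) (\<lambda>t. PA t ^ j * (\<lambda>t. 0) t))) = 1"
    by (rule perI[OF assms _ bz ba]) simp
  then show ?thesis using fr_zero by simp
qed

context
  fixes R
  assumes nvR: "nv R" and cR: "cont R" and perR: "perR R"
begin

lemma TT_nz: "x \<in> X \<Longrightarrow> TT R K x \<noteq> 0"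
  unfolding TT_def using nvD[OF nvR] smulP_X by simp

lemma TT_cauchy: assumes e: "0 < e"
  shows "\<exists>N. \<forall>x\<in>X. \<forall>K K'. N \<le> K \<longrightarrow> K \<le> K' \<longrightarrow> near1 e (TT R K' x / TT R K x)"
proof -
  define e' where "e' = min e 1"
  have e': "0 < e'" "e' \<le> 1" "e' \<le> e" unfolding e'_def using e by auto
  obtain N where N: "\<forall>x\<in>X. \<forall>y\<in>X. agr N x y \<longrightarrow> near1 e' (R x / R y)" using unif[OF nvR cR e'(1)] by blast
  have "\<forall>x\<in>X. \<forall>K K'. N \<le> K \<longrightarrow> K \<le> K' \<longrightarrow> near1 e (TT R K' x / TT R K x)"
  proof (intro ballI allI impI)
    fix x K K' assume x: "x \<in> X" and K: "N \<le> K" "K \<le> K'"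
    have "TT R K' x = TT R K x * (\<Prod>j<K' - K. R (smulP (Suc (K + j)) x))"
      unfolding TT_def using prod_split[of "\<lambda>i. R (smulP (Suc i) x)" K "K' - K"] K by simp
    then have eq: "TT R K' x / TT R K x = (\<Prod>j<K' - K. R (smulP (Suc (K + j)) x))" using TT_nz[OF x] by simp
    have "near1 e' (\<Prod>j<K' - K. R (smulP (Suc (K + j)) x))"
    proof (rule near1_prod[OF e'(1,2)])
      fix j
      have "agr (Suc (K + j)) (smulP (Suc (K + j)) x) zeroP" by (rule smulP_zero)
      then have "agr N (smulP (Suc (K + j)) x) zeroP" using agr_mono[OF smulP_X[OF x] zeroP_X] K by simp
      then have "near1 e' (R (smulP (Suc (K + j)) x) / R zeroP)" using N smulP_X[OF x] zeroP_X by blast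
      then show "near1 e' (R (smulP (Suc (K + j)) x))" using R_zero[OF perR] by simp
    qed
    then show "near1 e (TT R K' x / TT R K x)" using eq near1_mono e' by simp
  qed
  then show ?thesis by blast
qed

definition "LL x = (SOME L. L \<noteq> 0 \<and> (\<forall>e>0. \<exists>N. \<forall>K\<ge>N. near1 e (L / TT R K x)))"

lemma LL_prop: assumes x: "x \<in> X" shows "LL x \<noteq> 0 \<and> (\<forall>e>0. \<exists>N. \<forall>K\<ge>N. near1 e (LL x / TT R K x))"
proof -
  have "\<exists>L. L \<noteq> 0 \<and> (\<forall>e>0. \<exists>N. \<forall>K\<ge>N. near1 e (L / TT R K x))"
  proof (rule lim_exists)
    show "\<And>K. TT R K x \<noteq> 0" using TT_nz[OF x] .
    fix e :: real assume "0 < e"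
    then show "\<exists>N. \<forall>K K'. N \<le> K \<longrightarrow> K \<le> K' \<longrightarrow> near1 e (TT R K' x / TT R K x)"
      using TT_cauchy x by blast
  qed
  then show ?thesis unfolding LL_def by (rule someI_ex)
qed

lemma LL_unif: assumes e: "0 < e" shows "\<exists>N. \<forall>x\<in>X. \<forall>K\<ge>N. near1 e (LL x / TT R K x)"
proof -
  define e' where "e' = min e 1"
  have e': "0 < e'" "e' \<le> 1" "e' \<le> e" unfolding e'_def using e by auto
  obtain N where N: "\<forall>x\<in>X. \<forall>K K'. N \<le> K \<longrightarrow> K \<le> K' \<longrightarrow> near1 e' (TT R K' x / TT R K x)"
    using TT_cauchy[OF e'(1)] by blast
  have "\<forall>x\<in>X. \<forall>K\<ge>N. near1 e (LL x / TT R K x)"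
  proof (intro ballI allI impI)
    fix x K assume x: "x \<in> X" and K: "N \<le> K"
    obtain Nx where Nx: "\<forall>K\<ge>Nx. near1 e' (LL x / TT R K x)" using LL_prop[OF x] e'(1) by blast
    define K' where "K' = max K Nx"
    have a: "near1 e' (LL x / TT R K' x)" using Nx K'_def by simp
    have b: "near1 e' (TT R K' x / TT R K x)" using N x K K'_def by simp
    have "LL x / TT R K x = (LL x / TT R K' x) * (TT R K' x / TT R K x)" using TT_nz[OF x, of K'] by simp
    moreover have "near1 e' ((LL x / TT R K' x) * (TT R K' x / TT R K x))" by (rule near1_mult[OF e'(2) a b])
    ultimately have "near1 e' (LL x / TT R K x)" by (simp only:)
    then show "near1 e (LL x / TT R K x)" using near1_mono e' by blast
  qed
  then show ?thesis by blast
qed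

definition "GG x = inverse (LL x)"

lemma GG_nv: "nv GG" unfolding nonvanishingP_def GG_def using LL_prop by simp

lemma GG_cont: "cont GG"
  unfolding cont_ratio[OF GG_nv]
proof (intro ballI allI impI)
  fix x e assume x: "x \<in> X" and e: "(0::real) < e"
  define e' where "e' = min e 1"
  have e': "0 < e'" "e' \<le> 1" "e' \<le> e" unfolding e'_def using e by auto
  obtain K where K: "\<forall>x\<in>X. \<forall>K'\<ge>K. near1 e' (LL x / TT R K' x)" using LL_unif[OF e'(1)] by blast
  obtain N where N: "\<forall>x\<in>X. \<forall>y\<in>X. agr N x y \<longrightarrow> near1 e' (R x / R y)" using unif[OF nvR cR e'(1)] by blast
  have "\<forall>y\<in>X. agr N y x \<longrightarrow> near1 e (GG y / GG x)"
  proof (intro ballI impI)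
    fix y assume y: "y \<in> X" and a: "agr N y x"
    have q1: "near1 e' (LL x / TT R K x)" using K x by simp
    have q3: "near1 e' (TT R K y / LL y)"
    proof -
      have "near1 e' (LL y / TT R K y)" using K y by simp
      then have "near1 e' (inverse (LL y / TT R K y))" by (rule near1_inverse[OF e'(2)])
      then show ?thesis by simp
    qed
    have q2: "near1 e' (TT R K x / TT R K y)"
    proof -
      have "TT R K x / TT R K y = (\<Prod>i<K. R (smulP (Suc i) x) / R (smulP (Suc i) y))"
        unfolding TT_def by (simp add: prod_dividef)
      also have "near1 e' \<dots>"
      proof (rule near1_prod[OF e'(1,2)])
        fix i
        have "agr N (smulP (Suc i) x) (smulP (Suc i) y)" using smulP_agr agr_sym[OF a] by blast
        then show "near1 e' (R (smulP (Suc i) x) / R (smulP (Suc i) y))" using N smulP_X x y by blast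
      qed
      finally show ?thesis .
    qed
    have "GG y / GG x = (LL x / TT R K x) * (TT R K x / TT R K y) * (TT R K y / LL y)"
      unfolding GG_def using TT_nz[OF x] TT_nz[OF y] LL_prop[OF x] LL_prop[OF y] by (simp add: field_simps)
    moreover have "near1 e' ((LL x / TT R K x) * (TT R K x / TT R K y) * (TT R K y / LL y))"
      using near1_mult[OF e'(2)] q1 q2 q3 by blast
    ultimately show "near1 e (GG y / GG x)" using near1_mono e' by simp
  qed
  then show "\<exists>N. \<forall>y\<in>X. agr N y x \<longrightarrow> near1 e (GG y / GG x)" by blast
qed

lemma GG_eq: assumes x: "x \<in> X" shows "R x = GG x / GG (psiP x)"
proof -
  have Lx: "LL x \<noteq> 0" using LL_prop[OF x] by simp
  have Lpx: "LL (psiP x) \<noteq> 0" using LL_prop[OF psiP_X[OF x]] by simp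
  have "R x * LL x / LL (psiP x) = 1"
  proof (rule near1_eq1)
    fix e :: real assume e: "0 < e"
    define e' where "e' = min e 1"
    have e': "0 < e'" "e' \<le> 1" "e' \<le> e" unfolding e'_def using e by auto
    obtain N where N: "\<forall>x\<in>X. \<forall>y\<in>X. agr N x y \<longrightarrow> near1 e' (R x / R y)" using unif[OF nvR cR e'(1)] by blast
    obtain N2 where N2: "\<forall>x\<in>X. \<forall>K\<ge>N2. near1 e' (LL x / TT R K x)" using LL_unif[OF e'(1)] by blast
    define K where "K = max (max N N2) 1"
    define Lv where "Lv = max N 1"
    have co: "near1 e' ((\<Prod>i<Suc K. R (smulP i x)) / (\<Prod>i<K. R (smulP (Suc i) (psiP x))))"
      by (rule core[where Lv=Lv, OF x _ _ _ _ e'(1,2) nvR perR N]) (simp_all add: K_def Lv_def)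
    have "(\<Prod>i<Suc K. R (smulP i x)) = R x * TT R K x"
      unfolding TT_def prod.lessThan_Suc_shift using smulP_0[OF x] by simp
    then have co': "near1 e' (R x * TT R K x / TT R K (psiP x))" using co unfolding TT_def by simp
    have q1: "near1 e' (LL x / TT R K x)" using N2 x K_def by simp
    have q3: "near1 e' (TT R K (psiP x) / LL (psiP x))"
    proof -
      have "near1 e' (LL (psiP x) / TT R K (psiP x))" using N2 psiP_X[OF x] K_def by simp
      then have "near1 e' (inverse (LL (psiP x) / TT R K (psiP x)))" by (rule near1_inverse[OF e'(2)])
      then show ?thesis by simp
    qed
    have "R x * LL x / LL (psiP x) = (R x * TT R K x / TT R K (psiP x)) * (LL x / TT R K x) * (TT R K (psiP x) / LL (psiP x))"
      using TT_nz[OF x] TT_nz[OF psiP_X[OF x]] Lpx by (simp add: field_simps)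
    moreover have "near1 e' ((R x * TT R K x / TT R K (psiP x)) * (LL x / TT R K x) * (TT R K (psiP x) / LL (psiP x)))"
      using near1_mult[OF e'(2)] co' q1 q3 by blast
    ultimately have "near1 e' (R x * LL x / LL (psiP x))" by (simp only:)
    then show "near1 e (R x * LL x / LL (psiP x))" using near1_mono e' by blast
  qed
  then show ?thesis unfolding GG_def using Lx Lpx by (simp add: field_simps)
qed

end

end

context main
begin

lemma back_dir:
  assumes nvGam: "nv Gam" and cGam: "cont Gam" and nvG: "nv G" and cG: "cont G"
    and Hx: "\<forall>x\<in>X. H x = Gam x * G x / G (psiP x)"
  shows "cont H \<and> nv H \<and> (\<forall>n\<ge>1. \<forall>az :: nat \<Rightarrow> int. \<forall>aa :: nat \<Rightarrow> 'f poly.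
              (\<forall>t<mZ. 0 \<le> az t \<and> az t < PZ t ^ n - 1) \<and>
              (\<forall>t<mA. degree (aa t) < degree (PA t ^ n - 1)) \<longrightarrow>
              (\<Prod>j<n. Gam (fr n (\<lambda>t. PZ t ^ j * az t) (\<lambda>t. PA t ^ j * aa t)))
              = (\<Prod>j<n. H (fr n (\<lambda>t. PZ t ^ j * az t) (\<lambda>t. PA t ^ j * aa t))))"
proof (intro conjI allI impI)
  define F where "F x = Gam x * (G x * inverse (G (psiP x)))" for x
  have HF: "\<And>x. x \<in> X \<Longrightarrow> H x = F x" unfolding F_def using Hx by (simp add: divide_inverse mult.assoc)
  have nvF: "nv F" unfolding F_def by (intro nv_mult nv_inv nv_psi nvGam nvG)
  have "cont F" unfolding F_def
    by (intro cont_mult nv_mult nv_inv nv_psi cont_inv cont_psi nvGam nvG cGam cG)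
  then show "cont H" using cont_cong[OF HF] by simp
  show "nv H" using nv_cong[OF HF] nvF by simp
  fix n :: nat and az :: "nat \<Rightarrow> int" and aa :: "nat \<Rightarrow> 'f poly"
  assume n: "1 \<le> n"
  define y where "y j = fr n (\<lambda>t. PZ t ^ j * az t) (\<lambda>t. PA t ^ j * aa t)" for j
  have yX: "y j \<in> X" for j unfolding y_def by (rule fr_X[OF n])
  have yper: "y (i + n) = y i" for i unfolding y_def by (rule fr_period)
  have ypsi: "psiP (y j) = y (j + (n - 1))" for j
  proof -
    have "psiP (y (Suc (j + (n - 1)))) = y (j + (n - 1))" unfolding y_def by (rule psi_frac[OF n])
    moreover have "Suc (j + (n - 1)) = j + n" using n by simp
    ultimately show ?thesis using yper by simp
  qed
  have "(\<Prod>j<n. G (psiP (y j))) = (\<Prod>j<n. G (y (j + (n - 1))))" using ypsi by simp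
  also have "\<dots> = (\<Prod>j<n. G (y j))" by (rule prod_shift) (metis yper)
  finally have PG: "(\<Prod>j<n. G (psiP (y j))) = (\<Prod>j<n. G (y j))" .
  have PG0: "(\<Prod>j<n. G (y j)) \<noteq> 0" using nvD[OF nvG yX] by simp
  have "(\<Prod>j<n. H (y j)) = (\<Prod>j<n. Gam (y j) * G (y j) / G (psiP (y j)))" using Hx yX by simp
  also have "\<dots> = (\<Prod>j<n. Gam (y j)) * ((\<Prod>j<n. G (y j)) / (\<Prod>j<n. G (psiP (y j))))"
    by (simp add: prod_dividef prod.distrib times_divide_eq_right)
  also have "\<dots> = (\<Prod>j<n. Gam (y j))" using PG PG0 by simp
  finally show "(\<Prod>j<n. Gam (y j)) = (\<Prod>j<n. H (y j))" by simp
qed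

lemma fwd_dir:
  assumes nvGam: "nv Gam" and cGam: "cont Gam" and cH: "cont H" and nvH: "nv H"
    and idH: "\<forall>n\<ge>1. \<forall>az :: nat \<Rightarrow> int. \<forall>aa :: nat \<Rightarrow> 'f poly.
              (\<forall>t<mZ. 0 \<le> az t \<and> az t < PZ t ^ n - 1) \<and>
              (\<forall>t<mA. degree (aa t) < degree (PA t ^ n - 1)) \<longrightarrow>
              (\<Prod>j<n. Gam (fr n (\<lambda>t. PZ t ^ j * az t) (\<lambda>t. PA t ^ j * aa t)))
              = (\<Prod>j<n. H (fr n (\<lambda>t. PZ t ^ j * az t) (\<lambda>t. PA t ^ j * aa t)))"
  shows "\<exists>G. cont G \<and> nv G \<and> (\<forall>x\<in>X. H x = Gam x * G x / G (psiP x))"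
proof -
  define R where "R x = H x * inverse (Gam x)" for x
  have nvR: "nv R" unfolding R_def by (intro nv_mult nv_inv nvH nvGam)
  have cR: "cont R" unfolding R_def by (intro cont_mult nv_inv cont_inv nvH nvGam cH cGam)
  have perR: "perR R" unfolding perR_def
  proof (intro allI impI)
    fix n :: nat and az :: "nat \<Rightarrow> int" and aa :: "nat \<Rightarrow> 'f poly"
    assume n: "1 \<le> n" and b: "(\<forall>t<mZ. 0 \<le> az t \<and> az t < PZ t ^ n - 1) \<and> (\<forall>t<mA. degree (aa t) < degree (PA t ^ n - 1))"
    define y where "y j = fr n (\<lambda>t. PZ t ^ j * az t) (\<lambda>t. PA t ^ j * aa t)" for j
    have yX: "y j \<in> X" for j unfolding y_def by (rule fr_X[OF n])
    have eq: "(\<Prod>j<n. Gam (y j)) = (\<Prod>j<n. H (y j))" using idH n b unfolding y_def by blast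
    have P0: "(\<Prod>j<n. Gam (y j)) \<noteq> 0" using nvD[OF nvGam yX] by simp
    have "(\<Prod>j<n. R (y j)) = (\<Prod>j<n. H (y j) / Gam (y j))"
      unfolding R_def by (simp add: divide_inverse)
    also have "\<dots> = (\<Prod>j<n. H (y j)) / (\<Prod>j<n. Gam (y j))" by (rule prod_dividef)
    also have "\<dots> = 1" using eq P0 by simp
    finally show "(\<Prod>j<n. R (fr n (\<lambda>t. PZ t ^ j * az t) (\<lambda>t. PA t ^ j * aa t))) = 1" unfolding y_def .
  qed
  have "\<forall>x\<in>X. H x = Gam x * GG R x / GG R (psiP x)"
  proof
    fix x assume x: "x \<in> X"
    have "R x = GG R x / GG R (psiP x)" by (rule GG_eq[OF nvR cR perR x])
    moreover have "H x = R x * Gam x" unfolding R_def using nvD[OF nvGam x] by simp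
    ultimately show "H x = Gam x * GG R x / GG R (psiP x)" by simp
  qed
  then show ?thesis using GG_cont[OF nvR cR perR] GG_nv[OF nvR cR perR] by blast
qed

end

theorem mainTheorem1:
  fixes absv :: "'k::field \<Rightarrow> real"
    and mZ mA :: nat
    and PZ :: "nat \<Rightarrow> int"
    and PA :: "nat \<Rightarrow> 'f::{field,finite} poly"
    and Gam H :: "'f obar \<Rightarrow> 'k"
  assumes K: "nonarch_complete_field absv"
    and PZ: "\<forall>t<mZ. \<exists>p e. prime p \<and> 1 \<le> e \<and> PZ t = p ^ e"
    and PA: "\<forall>t<mA. \<exists>v e. lead_coeff v = 1 \<and> irreducible v \<and> 1 \<le> e \<and> PA t = v ^ e"
    and Gam_cont: "contP mZ mA PZ PA absv Gam"
    and Gam_nz: "nonvanishingP mZ mA PZ PA Gam"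
  shows "(contP mZ mA PZ PA absv H \<and> nonvanishingP mZ mA PZ PA H \<and>
           (\<forall>n\<ge>1. \<forall>az :: nat \<Rightarrow> int. \<forall>aa :: nat \<Rightarrow> 'f poly.
              (\<forall>t<mZ. 0 \<le> az t \<and> az t < PZ t ^ n - 1) \<and>
              (\<forall>t<mA. degree (aa t) < degree (PA t ^ n - 1)) \<longrightarrow>
              (\<Prod>j<n. Gam (fracP mZ mA PZ PA n (\<lambda>t. PZ t ^ j * az t) (\<lambda>t. PA t ^ j * aa t)))
              = (\<Prod>j<n. H (fracP mZ mA PZ PA n (\<lambda>t. PZ t ^ j * az t) (\<lambda>t. PA t ^ j * aa t)))))
         \<longleftrightarrow>
         (\<exists>G :: 'f obar \<Rightarrow> 'k. contP mZ mA PZ PA absv G \<and> nonvanishingP mZ mA PZ PA G \<and>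
            (\<forall>x\<in>ObarP mZ mA PZ PA.
               H x = Gam x * G x / G (negP mZ mA PZ PA (phiP mZ mA PZ PA (negP mZ mA PZ PA x)))))"
proof -
  have PZ2: "\<And>t. t < mZ \<Longrightarrow> PZ t \<ge> 2"
  proof -
    fix t assume t: "t < mZ"
    obtain p e where pe: "prime p" "1 \<le> e" "PZ t = p ^ e" using PZ t by blast
    have p2: "p \<ge> 2" using pe(1) by (simp add: prime_ge_2_int)
    have "p ^ 1 \<le> p ^ e" using p2 pe(2) by (intro power_increasing) auto
    then show "PZ t \<ge> 2" using pe(3) p2 by simp
  qed
  have PAd: "\<And>t. t < mA \<Longrightarrow> degree (PA t) \<ge> 1"
  proof -
    fix t assume t: "t < mA"
    obtain v e where ve: "lead_coeff v = 1" "irreducible v" "1 \<le> e" "PA t = v ^ e" using PA t by blast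
    have v0: "v \<noteq> 0" using ve(2) by auto
    have "\<not> is_unit v" using ve(2) irreducible_not_unit by blast
    then have "degree v \<noteq> 0" using is_unit_iff_degree[OF v0] by simp
    moreover have "degree (PA t) = e * degree v" using ve(4) degree_power_eq[OF v0] by simp
    ultimately show "degree (PA t) \<ge> 1" using ve(3) by simp
  qed
  interpret M: main absv mZ mA PZ PA
    unfolding main_def vf_def prodsp_def using K PZ2 PAd by blast
  have psi: "\<And>x. negP mZ mA PZ PA (phiP mZ mA PZ PA (negP mZ mA PZ PA x)) = M.psiP x"
    unfolding M.psiP_def by simp
  show ?thesis unfolding psi
    using M.back_dir[OF Gam_nz Gam_cont] M.fwd_dir[OF Gam_nz Gam_cont] by blast
qed

end
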